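(* Let $(z,y)\in D'\times D$ satisfy the paraxial approximation, i.e. for $0<\eta\ll 1$, \[ y=\left( \eta^{\frac{1}{2}} y^\perp,y^\parallel \right)\in D, \qquad z=\left(\eta^{\frac{1}{2}} z^\perp,z^\parallel \right)\in D'. \] In the paraxial regime in dimension $3$ the point spread function has the expression \begin{multline*} F^{c}(z,y) = \eta^{-1} \left(\frac{c}{c^\star}\right)^2 \frac{\ell_0^4}{\left(16\pi^2|z||\varphi_c(y)| \right)^2} \int_{\mathcal{B}_0}\omega^2 e^{i\frac{2\omega}{\eta c}\left( |z| - |\varphi_c(y)| \right)} e^{i\frac{\omega}{c}\left(1-\left(\frac{c^\star}{c}\right)^2\right) \frac{\vert \varphi_c(y)^\perp\vert^2}{\vert \varphi_c(y)\vert}} \\ \mathcal{G}^2\left(\frac{\omega\ell_0}{c}\left( \frac{z^\perp}{|z|}- \frac{\varphi_c(y)^\perp}{|\varphi_c(y)|}\right) , \frac{\omega\ell_0^2}{c}\left( \frac{1}{|z|} - \left(\frac{c}{c^\star}\right)^2\frac{1}{|\varphi_c(y)|}\right)\right)\mathrm{d} \omega+ \mathcal{O}(1), \end{multline*} or equivalently \begin{multline*} F^{c}(z,y) = \eta^{-1} \left(\frac{c^\star}{c}\right)^2 \frac{\ell_0^4}{\left(16\pi^2|y||\varphi_c^{-1}(z)| \right)^2} \int_{\mathcal{B}_0}\omega^2 e^{i\frac{2\omega}{\eta c^\star}\left( |\varphi_c^{-1}(z)| - |y| \right)} e^{i\frac{\omega}{c^\star}\left(\left(\frac{c}{c^\star}\right)^2-1\right)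 \frac{\vert \varphi_c^{-1}(z)^\perp\vert^2}{\vert \varphi^{-1}_c(z)\vert}} \\ \mathcal{G}^2\left(\frac{\omega\ell_0}{c^\star}\left( \frac{\varphi_c^{-1}(z)^\perp}{|\varphi_c^{-1}(z)|}- \frac{y^\perp}{|y|}\right) , \frac{\omega\ell_0^2}{c^\star}\left( \left(\frac{c^\star}{c}\right)^2 \frac{1}{|\varphi_c^{-1}(z)|} - \frac{1}{|y|}\right)\right)\mathrm{d} \omega + \mathcal{O}(1), \end{multline*} where \[ \mathcal{G}(\xi_1,\xi_2) := \int_{[-1,1]^2} e^{-i x_e^\perp \cdot \xi_1 + i \frac{\left\vert x_e^\perp\right\vert^2}{2} \xi_2} \,\mathrm{d} x_e^\perp, \qquad \xi_1 \in \mathbb{R}^2,\ \xi_2\in \mathbb{R}, \] and \[ \varphi_c: D \to D',\qquad \varphi_c(y):= \left(\eta^\frac{1}{2} \left( \frac{c}{c^\star}\right)^2y^\perp, \frac{c}{c^\star} y^\parallel\right). \]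
   Context: Setting: a medium $D\subset\mathbb{R}^d$ (here $d=3$) with random micro-structured index $n_\varepsilon(x)=n(x/\varepsilon)$ whose homogenized (effective) index equals the background index $n^\star$; effective speed of sound $c^\star=1/\sqrt{n^\star}$, and the homogenized Green function is $G^\star=\Gamma^{\omega/c^\star}$, where $\Gamma^k$ is the outgoing free-space Helmholtz Green function with wavenumber $k$. A linear probe $\mathcal{P}=[-\ell,\ell]^{d-1}\times\{0\}$ records the measurements $M(x_e,x_r,\omega)=\omega^2\int_D (n_\varepsilon(y)-n^\star)G^\star(x_r,y)G^\star(x_e,y)\,\mathrm{d}y$ for $\omega$ in the band $\mathcal{B}$. The imaging function with backpropagation speed $c$ is $I^c(z)=\int_{\mathcal{P}\times\mathcal{P}\times\mathcal{B}}\overline{M(x_e,x_r,\omega)}\Gamma^{\omega/c}(z,x_e)\Gamma^{\omega/c}(z,x_r)\,\mathrm{d}x_e\mathrm{d}x_r\mathrm{d}\omega$ for $z$ in the virtual image domain $D'$; it equals $\int_D(n_\varepsilon(y)-n^\star)F^c(z,y)\,\mathrm{d}y$ with point spread function $F^c(z,y)=\int_{\mathcal{B}}\omega^2\left(\int_{\mathcal{P}}\Gamma^{\omega/c}(z,x_r)\overline{G^\star(y,x_r)}\,\mathrm{d}x_r\right)^2\mathrm{d}\omega$. Paraxial scaling with small parameter $\eta$: central frequency $\omega_c=\omega_0/\eta$, bandwidth $\mathcal{B}=\mathcal{B}_0/\eta$ (frequencies rescaled to the band $\mathcal{B}_0$), probe half-length $\ell=\eta^{1/2}\ell_0$, $\mathcal{P}=\eta^{1/2}\mathcal{P}_0$,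 $\varepsilon=\eta^\alpha$, $\alpha>0$. For a point $y$, $y^\perp\in\mathbb{R}^{d-1}$ denotes the transverse coordinate rescaled by $\eta^{-1/2}$ and $y^\parallel\ge 0$ denotes the axial (depth) coordinate. *)

theory Defs
  imports "HOL-Analysis.Analysis" "HOL-Library.Landau_Symbols"
begin

text \<open>Points of R^3 are represented as pairs (transverse part in R^2, axial/depth part).
  The product norm on real^2 \<times> real is the Euclidean norm of R^3.\<close>
type_synonym pt3 = "(real^2) \<times> real"

definition Gamma3 :: "real \<Rightarrow> pt3 \<Rightarrow> pt3 \<Rightarrow> complex" where
  "Gamma3 k x y = cis (k * dist x y) / complex_of_real (4 * pi * dist x y)"

definition sq2 :: "real \<Rightarrow> (real^2) set" where
  "sq2 a = cbox (\<chi> i. - a) (\<chi> i. a)"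

text \<open>Point spread function F^c(z,y) for backpropagation speed c, effective speed cs (= c*),
  probe P = [-l,l]^2 \<times> {0} and frequency band B.\<close>
definition psf :: "real \<Rightarrow> real \<Rightarrow> real \<Rightarrow> real set \<Rightarrow> pt3 \<Rightarrow> pt3 \<Rightarrow> complex" where
  "psf c cs l B z y =
     integral B (\<lambda>\<omega>. complex_of_real (\<omega>^2) *
       (integral (sq2 l) (\<lambda>xr. Gamma3 (\<omega> / c) z (xr, 0) * cnj (Gamma3 (\<omega> / cs) y (xr, 0))))^2)"

definition GG :: "real^2 \<Rightarrow> real \<Rightarrow> complex" where
  "GG \<xi>1 \<xi>2 = integral (sq2 1) (\<lambda>u. cis (- (u \<bullet> \<xi>1) + (norm u)^2 / 2 * \<xi>2))"

text \<open>Paraxially scaled point: actual point with rescaled transverse coordinate xp, depth xa.\<close>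
definition parax :: "real \<Rightarrow> real^2 \<Rightarrow> real \<Rightarrow> pt3" where
  "parax \<eta> xp xa = (sqrt \<eta> *\<^sub>R xp, xa)"

definition perp :: "real \<Rightarrow> pt3 \<Rightarrow> real^2" where
  "perp \<eta> x = (1 / sqrt \<eta>) *\<^sub>R fst x"

text \<open>\<phi>_c on actual points: (\<eta>^(1/2) y^\<perp>, y^\<parallel>) \<mapsto> (\<eta>^(1/2) (c/c*)^2 y^\<perp>, (c/c*) y^\<parallel>).\<close>
definition phi :: "real \<Rightarrow> real \<Rightarrow> pt3 \<Rightarrow> pt3" where
  "phi c cs y = ((c / cs)^2 *\<^sub>R fst y, (c / cs) * snd y)"

definition phi_inv :: "real \<Rightarrow> real \<Rightarrow> pt3 \<Rightarrow> pt3" where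
  "phi_inv c cs z = ((cs / c)^2 *\<^sub>R fst z, (cs / c) * snd z)"

definition lead1 :: "real \<Rightarrow> real \<Rightarrow> real \<Rightarrow> real set \<Rightarrow> real \<Rightarrow> pt3 \<Rightarrow> pt3 \<Rightarrow> complex" where
  "lead1 c cs l0 B0 \<eta> z y =
    (let p = phi c cs y; np = norm p; nz = norm z in
     complex_of_real (inverse \<eta> * (c / cs)^2 * l0^4 / (16 * pi^2 * nz * np)^2) *
     integral B0 (\<lambda>\<omega>. complex_of_real (\<omega>^2) *
        cis (2 * \<omega> / (\<eta> * c) * (nz - np)) *
        cis (\<omega> / c * (1 - (cs / c)^2) * (norm (perp \<eta> p))^2 / np) *
        (GG ((\<omega> * l0 / c) *\<^sub>R ((1 / nz) *\<^sub>R perp \<eta> z - (1 / np) *\<^sub>R perp \<eta> p))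
            (\<omega> * l0^2 / c * (1 / nz - (c / cs)^2 * (1 / np))))^2))"

definition lead2 :: "real \<Rightarrow> real \<Rightarrow> real \<Rightarrow> real set \<Rightarrow> real \<Rightarrow> pt3 \<Rightarrow> pt3 \<Rightarrow> complex" where
  "lead2 c cs l0 B0 \<eta> z y =
    (let q = phi_inv c cs z; nq = norm q; ny = norm y in
     complex_of_real (inverse \<eta> * (cs / c)^2 * l0^4 / (16 * pi^2 * ny * nq)^2) *
     integral B0 (\<lambda>\<omega>. complex_of_real (\<omega>^2) *
        cis (2 * \<omega> / (\<eta> * cs) * (nq - ny)) *
        cis (\<omega> / cs * ((c / cs)^2 - 1) * (norm (perp \<eta> q))^2 / nq) *
        (GG ((\<omega> * l0 / cs) *\<^sub>R ((1 / nq) *\<^sub>R perp \<eta> q - (1 / ny) *\<^sub>R perp \<eta> y))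
            (\<omega> * l0^2 / cs * ((cs / c)^2 * (1 / nq) - 1 / ny)))^2))"

end

theory Submission
  imports Defs
begin

lemma sqrt_rem_bound:
  fixes p t :: real
  assumes "p > 0" "t \<ge> 0"
  shows "\<bar>sqrt (p^2 + t) - p - t / (2*p)\<bar> \<le> t^2 / (8 * p^3)"
proof -
  define s where "s = sqrt (p^2 + t)"
  have s0: "s \<ge> p" unfolding s_def using assms by (simp add: real_le_rsqrt)
  have ss: "s^2 = p^2 + t" unfolding s_def using assms by simp
  have sp: "s - p = t / (s + p)" using s0 assms ss by (simp add: field_simps power2_eq_square)
  have spp: "s + p > 0" using s0 assms by simp
  have "t / (2*p) - (s - p) = t / (2*p) - t / (s + p)" using sp by simp
  also have "\<dots> = t * (s - p) / (2*p*(s+p))" using spp assms by (simp add: diff_frac_eq algebra_simps)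
  also have "\<dots> = t * (t / (s+p)) / (2*p*(s+p))" using sp by simp
  also have "\<dots> = t^2 / (2*p*(s+p)^2)" by (simp add: power2_eq_square)
  finally have "t / (2*p) - (s - p) = t^2 / (2*p*(s+p)^2)" .
  moreover have "t^2 / (2*p*(s+p)^2) \<le> t^2 / (8 * p^3)"
  proof -
    have "(2*p)^2 \<le> (s+p)^2" using s0 assms by (intro power_mono) auto
    then have "2*p*(2*p)^2 \<le> 2*p*(s+p)^2" using assms by (intro mult_left_mono) auto
    moreover have "2*p*(2*p)^2 = 8 * p^3" by (simp add: power2_eq_square power3_eq_cube)
    ultimately have "8 * p^3 \<le> 2*p*(s+p)^2" by simp
    then show ?thesis using assms by (intro divide_left_mono) (auto intro!: mult_pos_pos)
  qed
  moreover have "t^2 / (2*p*(s+p)^2) \<ge> 0" using assms s0 by simp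
  ultimately show ?thesis unfolding s_def by linarith
qed

lemma sqrt_le_lin:
  fixes p t :: real
  assumes "p > 0" "t \<ge> 0"
  shows "p \<le> sqrt (p^2 + t)" "sqrt (p^2 + t) \<le> p + t / (2*p)"
proof -
  show "p \<le> sqrt (p^2 + t)" using assms by (simp add: real_le_rsqrt)
  have "p^2 + t \<le> (p + t/(2*p))^2" using assms by (simp add: power2_eq_square field_simps)
  then show "sqrt (p^2 + t) \<le> p + t / (2*p)" using assms
    by (metis add_nonneg_nonneg divide_nonneg_pos less_eq_real_def real_le_lsqrt zero_less_mult_iff zero_less_numeral)
qed

lemma inv_sqrt_bound:
  fixes p t :: real
  assumes "p > 0" "t \<ge> 0"
  shows "\<bar>1 / sqrt (p^2 + t) - 1/p\<bar> \<le> t / (2 * p^3)"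
proof -
  define s where "s = sqrt (p^2 + t)"
  have s0: "p \<le> s" "s \<le> p + t/(2*p)" using sqrt_le_lin[OF assms] unfolding s_def by auto
  have "1/p - 1/s = (s - p) / (p * s)" using s0 assms by (simp add: field_simps)
  moreover have "(s - p) / (p * s) \<le> (t/(2*p)) / (p * p)"
    using s0 assms by (intro frac_le) (auto intro!: mult_pos_pos mult_left_mono)
  moreover have "(s - p) / (p * s) \<ge> 0" using s0 assms by simp
  moreover have "(t/(2*p)) / (p * p) = t / (2 * p^3)" by (simp add: power3_eq_cube)
  ultimately show ?thesis unfolding s_def[symmetric] by linarith
qed


definition UB :: "(real \<Rightarrow> 'p \<Rightarrow> real) \<Rightarrow> 'p set \<Rightarrow> bool" where
  "UB f S \<longleftrightarrow> (\<exists>M. \<forall>\<eta> p. 0 < \<eta> \<longrightarrow> \<eta> \<le> 1 \<longrightarrow> p \<in> S \<longrightarrow> \<bar>f \<eta> p\<bar> \<le> M)"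

definition UO :: "(real \<Rightarrow> 'p \<Rightarrow> real) \<Rightarrow> 'p set \<Rightarrow> bool" where
  "UO f S \<longleftrightarrow> (\<exists>C. \<forall>\<eta> p. 0 < \<eta> \<longrightarrow> \<eta> \<le> 1 \<longrightarrow> p \<in> S \<longrightarrow> \<bar>f \<eta> p\<bar> \<le> C * \<eta>)"

lemma UB_I: "(\<And>\<eta> p. 0 < \<eta> \<Longrightarrow> \<eta> \<le> 1 \<Longrightarrow> p \<in> S \<Longrightarrow> \<bar>f \<eta> p\<bar> \<le> M) \<Longrightarrow> UB f S"
  unfolding UB_def by blast

lemma UB_D: "UB f S \<Longrightarrow> \<exists>M. \<forall>\<eta> p. 0 < \<eta> \<longrightarrow> \<eta> \<le> 1 \<longrightarrow> p \<in> S \<longrightarrow> \<bar>f \<eta> p\<bar> \<le> M"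
  unfolding UB_def by assumption

lemma UO_I: "(\<And>\<eta> p. 0 < \<eta> \<Longrightarrow> \<eta> \<le> 1 \<Longrightarrow> p \<in> S \<Longrightarrow> \<bar>f \<eta> p\<bar> \<le> C * \<eta>) \<Longrightarrow> UO f S"
  unfolding UO_def by blast

lemma UO_D: "UO f S \<Longrightarrow> \<exists>C. \<forall>\<eta> p. 0 < \<eta> \<longrightarrow> \<eta> \<le> 1 \<longrightarrow> p \<in> S \<longrightarrow> \<bar>f \<eta> p\<bar> \<le> C * \<eta>"
  unfolding UO_def by assumption

lemma UB_const: "UB (\<lambda>_ _. c) S"
  by (rule UB_I[where M="\<bar>c\<bar>"]) simp

lemma UB_add: fixes f g :: "real \<Rightarrow> 'p \<Rightarrow> real" assumes "UB f S" "UB g S" shows "UB (\<lambda>\<eta> p. f \<eta> p + g \<eta> p) S"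
proof -
  obtain M where M: "\<forall>\<eta> p. 0 < \<eta> \<longrightarrow> \<eta> \<le> 1 \<longrightarrow> p \<in> S \<longrightarrow> \<bar>f \<eta> p\<bar> \<le> M" using UB_D[OF assms(1)] by blast
  obtain N where N: "\<forall>\<eta> p. 0 < \<eta> \<longrightarrow> \<eta> \<le> 1 \<longrightarrow> p \<in> S \<longrightarrow> \<bar>g \<eta> p\<bar> \<le> N" using UB_D[OF assms(2)] by blast
  show ?thesis
  proof (rule UB_I[where M="M + N"])
    fix \<eta> :: real and p assume h: "0 < \<eta>" "\<eta> \<le> 1" "p \<in> S"
    have "\<bar>f \<eta> p\<bar> \<le> M" "\<bar>g \<eta> p\<bar> \<le> N" using M N h by auto
    then show "\<bar>f \<eta> p + g \<eta> p\<bar> \<le> M + N" by linarith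
  qed
qed

lemma UB_minus: fixes f g :: "real \<Rightarrow> 'p \<Rightarrow> real" assumes "UB f S" shows "UB (\<lambda>\<eta> p. - f \<eta> p) S"
  using assms unfolding UB_def by simp

lemma UB_diff: fixes f g :: "real \<Rightarrow> 'p \<Rightarrow> real" assumes "UB f S" "UB g S" shows "UB (\<lambda>\<eta> p. f \<eta> p - g \<eta> p) S"
  using UB_add[OF assms(1) UB_minus[OF assms(2)]] by simp

lemma UB_mult: fixes f g :: "real \<Rightarrow> 'p \<Rightarrow> real" assumes "UB f S" "UB g S" shows "UB (\<lambda>\<eta> p. f \<eta> p * g \<eta> p) S"
proof -
  obtain M where M: "\<forall>\<eta> p. 0 < \<eta> \<longrightarrow> \<eta> \<le> 1 \<longrightarrow> p \<in> S \<longrightarrow> \<bar>f \<eta> p\<bar> \<le> M" using UB_D[OF assms(1)] by blast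
  obtain N where N: "\<forall>\<eta> p. 0 < \<eta> \<longrightarrow> \<eta> \<le> 1 \<longrightarrow> p \<in> S \<longrightarrow> \<bar>g \<eta> p\<bar> \<le> N" using UB_D[OF assms(2)] by blast
  show ?thesis
  proof (rule UB_I[where M="M * N"])
    fix \<eta> :: real and p assume h: "0 < \<eta>" "\<eta> \<le> 1" "p \<in> S"
    have a: "\<bar>f \<eta> p\<bar> \<le> M" "\<bar>g \<eta> p\<bar> \<le> N" using M N h by auto
    show "\<bar>f \<eta> p * g \<eta> p\<bar> \<le> M * N" unfolding abs_mult
      using a by (intro mult_mono) auto
  qed
qed

lemma UB_cong: fixes f g :: "real \<Rightarrow> 'p \<Rightarrow> real" assumes "UB f S" "\<And>\<eta> p. 0 < \<eta> \<Longrightarrow> \<eta> \<le> 1 \<Longrightarrow> p \<in> S \<Longrightarrow> f \<eta> p = g \<eta> p" shows "UB g S"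
proof -
  obtain M where M: "\<forall>\<eta> p. 0 < \<eta> \<longrightarrow> \<eta> \<le> 1 \<longrightarrow> p \<in> S \<longrightarrow> \<bar>f \<eta> p\<bar> \<le> M" using UB_D[OF assms(1)] by blast
  show ?thesis
  proof (rule UB_I[where M=M])
    fix \<eta> :: real and p assume h: "0 < \<eta>" "\<eta> \<le> 1" "p \<in> S"
    show "\<bar>g \<eta> p\<bar> \<le> M" using M h assms(2)[OF h, symmetric] by auto
  qed
qed

lemma UO_add: fixes f g :: "real \<Rightarrow> 'p \<Rightarrow> real" assumes "UO f S" "UO g S" shows "UO (\<lambda>\<eta> p. f \<eta> p + g \<eta> p) S"
proof -
  obtain M where M: "\<forall>\<eta> p. 0 < \<eta> \<longrightarrow> \<eta> \<le> 1 \<longrightarrow> p \<in> S \<longrightarrow> \<bar>f \<eta> p\<bar> \<le> M * \<eta>" using UO_D[OF assms(1)] by blast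
  obtain N where N: "\<forall>\<eta> p. 0 < \<eta> \<longrightarrow> \<eta> \<le> 1 \<longrightarrow> p \<in> S \<longrightarrow> \<bar>g \<eta> p\<bar> \<le> N * \<eta>" using UO_D[OF assms(2)] by blast
  show ?thesis
  proof (rule UO_I[where C="M + N"])
    fix \<eta> :: real and p assume h: "0 < \<eta>" "\<eta> \<le> 1" "p \<in> S"
    have "\<bar>f \<eta> p\<bar> \<le> M * \<eta>" "\<bar>g \<eta> p\<bar> \<le> N * \<eta>" using M N h by auto
    then show "\<bar>f \<eta> p + g \<eta> p\<bar> \<le> (M + N) * \<eta>" by (simp add: distrib_right)
  qed
qed

lemma UO_minus: fixes f g :: "real \<Rightarrow> 'p \<Rightarrow> real" assumes "UO f S" shows "UO (\<lambda>\<eta> p. - f \<eta> p) S"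
  using assms unfolding UO_def by simp

lemma UO_diff: fixes f g :: "real \<Rightarrow> 'p \<Rightarrow> real" assumes "UO f S" "UO g S" shows "UO (\<lambda>\<eta> p. f \<eta> p - g \<eta> p) S"
  using UO_add[OF assms(1) UO_minus[OF assms(2)]] by simp

lemma UO_mult_UB: fixes f g :: "real \<Rightarrow> 'p \<Rightarrow> real" assumes "UB f S" "UO g S" shows "UO (\<lambda>\<eta> p. f \<eta> p * g \<eta> p) S"
proof -
  obtain M where M: "\<forall>\<eta> p. 0 < \<eta> \<longrightarrow> \<eta> \<le> 1 \<longrightarrow> p \<in> S \<longrightarrow> \<bar>f \<eta> p\<bar> \<le> M" using UB_D[OF assms(1)] by blast
  obtain N where N: "\<forall>\<eta> p. 0 < \<eta> \<longrightarrow> \<eta> \<le> 1 \<longrightarrow> p \<in> S \<longrightarrow> \<bar>g \<eta> p\<bar> \<le> N * \<eta>" using UO_D[OF assms(2)] by blast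
  show ?thesis
  proof (rule UO_I[where C="M * N"])
    fix \<eta> :: real and p assume h: "0 < \<eta>" "\<eta> \<le> 1" "p \<in> S"
    have a: "\<bar>f \<eta> p\<bar> \<le> M" "\<bar>g \<eta> p\<bar> \<le> N * \<eta>" using M N h by auto
    have "\<bar>f \<eta> p * g \<eta> p\<bar> \<le> M * (N * \<eta>)" unfolding abs_mult
      using a by (intro mult_mono) auto
    then show "\<bar>f \<eta> p * g \<eta> p\<bar> \<le> M * N * \<eta>" by (simp add: mult.assoc)
  qed
qed

lemma UO_mult_UB': fixes f g :: "real \<Rightarrow> 'p \<Rightarrow> real" assumes "UO g S" "UB f S" shows "UO (\<lambda>\<eta> p. g \<eta> p * f \<eta> p) S"
  using UO_mult_UB[OF assms(2,1)] by (simp add: mult.commute)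

lemma UO_imp_UB: fixes f g :: "real \<Rightarrow> 'p \<Rightarrow> real" assumes "UO f S" shows "UB f S"
proof -
  obtain N where N: "\<forall>\<eta> p. 0 < \<eta> \<longrightarrow> \<eta> \<le> 1 \<longrightarrow> p \<in> S \<longrightarrow> \<bar>f \<eta> p\<bar> \<le> N * \<eta>" using UO_D[OF assms] by blast
  show ?thesis
  proof (rule UB_I[where M="\<bar>N\<bar>"])
    fix \<eta> :: real and p assume h: "0 < \<eta>" "\<eta> \<le> 1" "p \<in> S"
    have a: "\<bar>f \<eta> p\<bar> \<le> N * \<eta>" using N h by auto
    have "N * \<eta> \<le> \<bar>N\<bar> * 1" using h by (intro mult_mono) auto
    then show "\<bar>f \<eta> p\<bar> \<le> \<bar>N\<bar>" using a by linarith
  qed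
qed

lemma UO_cong: fixes f g :: "real \<Rightarrow> 'p \<Rightarrow> real" assumes "UO f S" "\<And>\<eta> p. 0 < \<eta> \<Longrightarrow> \<eta> \<le> 1 \<Longrightarrow> p \<in> S \<Longrightarrow> f \<eta> p = g \<eta> p" shows "UO g S"
proof -
  obtain M where M: "\<forall>\<eta> p. 0 < \<eta> \<longrightarrow> \<eta> \<le> 1 \<longrightarrow> p \<in> S \<longrightarrow> \<bar>f \<eta> p\<bar> \<le> M * \<eta>" using UO_D[OF assms(1)] by blast
  show ?thesis
  proof (rule UO_I[where C=M])
    fix \<eta> :: real and p assume h: "0 < \<eta>" "\<eta> \<le> 1" "p \<in> S"
    show "\<bar>g \<eta> p\<bar> \<le> M * \<eta>" using M h assms(2)[OF h, symmetric] by auto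
  qed
qed


lemma UO_sqrt_rem:
  fixes W T :: "real \<Rightarrow> 'p \<Rightarrow> real"
  assumes p: "p > 0" and W: "UB W S" and T: "UB T S"
    and T0: "\<And>\<eta> q. 0 < \<eta> \<Longrightarrow> \<eta> \<le> 1 \<Longrightarrow> q \<in> S \<Longrightarrow> T \<eta> q \<ge> 0"
  shows "UO (\<lambda>\<eta> q. W \<eta> q / \<eta> * (sqrt (p^2 + \<eta> * T \<eta> q) - p - \<eta> * T \<eta> q / (2*p))) S"
proof -
  obtain M where M: "\<forall>\<eta> q. 0 < \<eta> \<longrightarrow> \<eta> \<le> 1 \<longrightarrow> q \<in> S \<longrightarrow> \<bar>W \<eta> q\<bar> \<le> M" using UB_D[OF W] by blast
  obtain N where N: "\<forall>\<eta> q. 0 < \<eta> \<longrightarrow> \<eta> \<le> 1 \<longrightarrow> q \<in> S \<longrightarrow> \<bar>T \<eta> q\<bar> \<le> N" using UB_D[OF T] by blast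
  show ?thesis
  proof (rule UO_I[where C="M * N^2 / (8*p^3)"])
    fix \<eta> :: real and q assume h: "0 < \<eta>" "\<eta> \<le> 1" "q \<in> S"
    have Mq: "\<bar>W \<eta> q\<bar> \<le> M" and Nq: "\<bar>T \<eta> q\<bar> \<le> N" using M N h by auto
    have T0q: "T \<eta> q \<ge> 0" using T0[OF h] .
    have t0: "\<eta> * T \<eta> q \<ge> 0" using T0q h by simp
    have r: "\<bar>sqrt (p^2 + \<eta> * T \<eta> q) - p - \<eta> * T \<eta> q / (2*p)\<bar> \<le> (\<eta> * T \<eta> q)^2 / (8*p^3)"
      by (rule sqrt_rem_bound[OF p t0])
    have "T \<eta> q ^2 \<le> N^2" using Nq T0q by (intro power_mono) auto
    then have r2: "(\<eta> * T \<eta> q)^2 / (8*p^3) \<le> \<eta>^2 * N^2 / (8*p^3)"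
      using p unfolding power_mult_distrib
      by (intro divide_right_mono mult_left_mono) auto
    have "\<bar>W \<eta> q / \<eta> * (sqrt (p^2 + \<eta> * T \<eta> q) - p - \<eta> * T \<eta> q / (2*p))\<bar>
        = \<bar>W \<eta> q\<bar> / \<eta> * \<bar>sqrt (p^2 + \<eta> * T \<eta> q) - p - \<eta> * T \<eta> q / (2*p)\<bar>"
      using h by (simp add: abs_mult)
    also have "\<dots> \<le> M / \<eta> * (\<eta>^2 * N^2 / (8*p^3))"
      using Mq r r2 h by (intro mult_mono divide_right_mono) auto
    also have "\<dots> = M * N^2 / (8*p^3) * \<eta>" using h by (simp add: power2_eq_square)
    finally show "\<bar>W \<eta> q / \<eta> * (sqrt (p^2 + \<eta> * T \<eta> q) - p - \<eta> * T \<eta> q / (2*p))\<bar> \<le> M * N^2 / (8*p^3) * \<eta>" .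
  qed
qed

lemma UO_inv_sqrt:
  fixes T :: "real \<Rightarrow> 'p \<Rightarrow> real"
  assumes p: "p > 0" and T: "UB T S"
    and T0: "\<And>\<eta> q. 0 < \<eta> \<Longrightarrow> \<eta> \<le> 1 \<Longrightarrow> q \<in> S \<Longrightarrow> T \<eta> q \<ge> 0"
  shows "UO (\<lambda>\<eta> q. 1 / sqrt (p^2 + \<eta> * T \<eta> q) - 1 / p) S"
proof -
  obtain N where N: "\<forall>\<eta> q. 0 < \<eta> \<longrightarrow> \<eta> \<le> 1 \<longrightarrow> q \<in> S \<longrightarrow> \<bar>T \<eta> q\<bar> \<le> N" using UB_D[OF T] by blast
  show ?thesis
  proof (rule UO_I[where C="N / (2*p^3)"])
    fix \<eta> :: real and q assume h: "0 < \<eta>" "\<eta> \<le> 1" "q \<in> S"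
    have Nq: "\<bar>T \<eta> q\<bar> \<le> N" using N h by auto
    have T0q: "T \<eta> q \<ge> 0" using T0[OF h] .
    have t0: "\<eta> * T \<eta> q \<ge> 0" using T0q h by simp
    have "\<bar>1 / sqrt (p^2 + \<eta> * T \<eta> q) - 1 / p\<bar> \<le> \<eta> * T \<eta> q / (2*p^3)"
      by (rule inv_sqrt_bound[OF p t0])
    also have "\<dots> \<le> \<eta> * N / (2*p^3)" using Nq T0q h p
      by (intro divide_right_mono mult_left_mono) auto
    finally show "\<bar>1 / sqrt (p^2 + \<eta> * T \<eta> q) - 1 / p\<bar> \<le> N / (2*p^3) * \<eta>" by (simp add: mult.commute)
  qed
qed

lemma UB_inv_sqrt:
  fixes T :: "real \<Rightarrow> 'p \<Rightarrow> real"
  assumes p: "p > 0"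
    and T0: "\<And>\<eta> q. 0 < \<eta> \<Longrightarrow> \<eta> \<le> 1 \<Longrightarrow> q \<in> S \<Longrightarrow> T \<eta> q \<ge> 0"
  shows "UB (\<lambda>\<eta> q. 1 / sqrt (p^2 + \<eta> * T \<eta> q)) S"
proof (rule UB_I[where M="1/p"])
  fix \<eta> :: real and q assume h: "0 < \<eta>" "\<eta> \<le> 1" "q \<in> S"
  have t0: "\<eta> * T \<eta> q \<ge> 0" using T0[OF h] h by simp
  have "p \<le> sqrt (p^2 + \<eta> * T \<eta> q)" using sqrt_le_lin(1)[OF p t0] .
  then show "\<bar>1 / sqrt (p^2 + \<eta> * T \<eta> q)\<bar> \<le> 1/p" using p
    by (simp add: frac_le)
qed


lemma cis_minus_one_bound: "cmod (cis t - 1) \<le> \<bar>t\<bar>"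
proof -
  have "(cmod (cis t - 1))^2 = (cos t - 1)^2 + (sin t)^2"
    by (simp add: cmod_power2)
  also have "\<dots> = 2 - 2 * cos t" using sin_cos_squared_add[of t] by (simp add: power2_eq_square algebra_simps)
  also have "\<dots> = 4 * (sin (t/2))^2" using cos_double_sin[of "t/2"] by simp
  also have "\<dots> \<le> 4 * (t/2)^2"
  proof -
    have "\<bar>sin (t/2)\<bar>^2 \<le> \<bar>t/2\<bar>^2" using abs_sin_x_le_abs_x[of "t/2"] by (intro power_mono) auto
    then show ?thesis by (simp only: power2_abs)
  qed
  also have "\<dots> = t^2" by (simp add: power2_eq_square)
  finally have "(cmod (cis t - 1))^2 \<le> \<bar>t\<bar>^2" by simp
  then show ?thesis by (rule power2_le_imp_le) simp
qed

lemma cis_diff_bound: "cmod (cis x - cis y) \<le> \<bar>x - y\<bar>"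
proof -
  have e: "cis y * cis (x - y) = cis x" by (simp add: cis_mult)
  have "cis x - cis y = cis y * (cis (x - y) - 1)" by (simp add: algebra_simps e)
  then have "cmod (cis x - cis y) = cmod (cis (x - y) - 1)" by (simp add: norm_mult)
  then show ?thesis using cis_minus_one_bound by simp
qed

lemma amp_cis_diff_bound:
  fixes a1 a2 t1 t2 :: real
  shows "cmod (of_real a1 * cis t1 - of_real a2 * cis t2) \<le> \<bar>a1 - a2\<bar> + \<bar>a2\<bar> * \<bar>t1 - t2\<bar>"
proof -
  have "of_real a1 * cis t1 - of_real a2 * cis t2 = of_real (a1 - a2) * cis t1 + of_real a2 * (cis t1 - cis t2)"
    by (simp add: algebra_simps)
  also have "cmod \<dots> \<le> cmod (of_real (a1 - a2) * cis t1) + cmod (of_real a2 * (cis t1 - cis t2))"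
    by (rule norm_triangle_ineq)
  also have "\<dots> \<le> \<bar>a1 - a2\<bar> + \<bar>a2\<bar> * \<bar>t1 - t2\<bar>"
  proof -
    have "cmod (of_real (a1 - a2) * cis t1) = \<bar>a1 - a2\<bar>" by (simp only: norm_mult norm_cis norm_of_real) simp
    moreover have "cmod (of_real a2 * (cis t1 - cis t2)) \<le> \<bar>a2\<bar> * \<bar>t1 - t2\<bar>"
      unfolding norm_mult norm_of_real using cis_diff_bound[of t1 t2] by (intro mult_left_mono) auto
    ultimately show ?thesis by linarith
  qed
  finally show ?thesis .
qed

lemma Gamma_prod:
  assumes "dist z x > 0" "dist y x > 0"
  shows "Gamma3 k z x * cnj (Gamma3 k' y x)
       = of_real (1 / (16 * pi^2) * (1 / dist z x * (1 / dist y x))) * cis (k * dist z x - k' * dist y x)"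
  using assms unfolding Gamma3_def
  by (simp add: cis_cnj cis_mult cis_divide[symmetric] power2_eq_square field_simps flip: of_real_mult)


lemma integral_scale_cbox:
  fixes F :: "'a::euclidean_space \<Rightarrow> 'b::real_normed_vector"
  assumes m: "m > 0"
  shows "integral (cbox a b) F = m ^ DIM('a) *\<^sub>R integral (cbox (a /\<^sub>R m) (b /\<^sub>R m)) (\<lambda>x. F (m *\<^sub>R x))"
proof (cases "F integrable_on cbox a b")
  case True
  then obtain I where I: "(F has_integral I) (cbox a b)" by (auto simp: integrable_on_def)
  have "((\<lambda>x. F (m *\<^sub>R x + 0)) has_integral (I /\<^sub>R m ^ DIM('a))) (cbox ((a - 0) /\<^sub>R m) ((b - 0) /\<^sub>R m))"
    using has_integral_affinity_iff[OF m, of F 0 I a b] I by simp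
  then have "integral (cbox (a /\<^sub>R m) (b /\<^sub>R m)) (\<lambda>x. F (m *\<^sub>R x)) = I /\<^sub>R m ^ DIM('a)"
    by (simp add: integral_unique)
  then show ?thesis using I m by (simp add: integral_unique)
next
  case False
  have "\<not> (\<lambda>x. F (m *\<^sub>R x)) integrable_on cbox (a /\<^sub>R m) (b /\<^sub>R m)"
  proof
    assume "(\<lambda>x. F (m *\<^sub>R x)) integrable_on cbox (a /\<^sub>R m) (b /\<^sub>R m)"
    then obtain J where J: "((\<lambda>x. F (m *\<^sub>R x)) has_integral J) (cbox (a /\<^sub>R m) (b /\<^sub>R m))"
      by (auto simp: integrable_on_def)
    have "J = (m ^ DIM('a) *\<^sub>R J) /\<^sub>R m ^ DIM('a)" using m by simp
    with J have "((\<lambda>x. F (m *\<^sub>R x + 0)) has_integral ((m ^ DIM('a) *\<^sub>R J) /\<^sub>R m ^ DIM('a))) (cbox ((a - 0) /\<^sub>R m) ((b - 0) /\<^sub>R m))"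
      by simp
    then have "(F has_integral (m ^ DIM('a) *\<^sub>R J)) (cbox a b)"
      using has_integral_affinity_iff[OF m, of F 0 "m ^ DIM('a) *\<^sub>R J" a b] by blast
    with False show False by (auto simp: integrable_on_def)
  qed
  then show ?thesis using False by (simp add: not_integrable_integral)
qed

lemma sq2_scale: "m > 0 \<Longrightarrow> (\<chi> i. - m) /\<^sub>R m = ((\<chi> i. - 1) :: real^2)" "m > 0 \<Longrightarrow> (\<chi> i. m) /\<^sub>R m = ((\<chi> i. 1) :: real^2)"
  by (auto simp: vec_eq_iff)

lemma integral_sq2_scale:
  fixes F :: "real^2 \<Rightarrow> complex"
  assumes m: "m > 0"
  shows "integral (sq2 m) F = of_real (m^2) * integral (sq2 1) (\<lambda>u. F (m *\<^sub>R u))"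
proof -
  have "integral (sq2 m) F = m ^ DIM(real^2) *\<^sub>R integral (cbox ((\<chi> i. - m) /\<^sub>R m) ((\<chi> i. m) /\<^sub>R m)) (\<lambda>x. F (m *\<^sub>R x))"
    unfolding sq2_def by (rule integral_scale_cbox[OF m])
  also have "\<dots> = m ^ 2 *\<^sub>R integral (sq2 1) (\<lambda>x. F (m *\<^sub>R x))"
    unfolding sq2_def sq2_scale[OF m] by simp
  finally show ?thesis by (simp add: scaleR_conv_of_real)
qed

lemma integral_interval_scale:
  fixes G :: "real \<Rightarrow> complex"
  assumes e: "\<eta> > 0"
  shows "integral {a/\<eta>..b/\<eta>} G = of_real (1/\<eta>) * integral {a..b} (\<lambda>w. G (w / \<eta>))"
proof -
  have m: "1/\<eta> > 0" using e by simp
  have "integral (cbox (a/\<eta>) (b/\<eta>)) G = (1/\<eta>) ^ DIM(real) *\<^sub>R integral (cbox ((a/\<eta>) /\<^sub>R (1/\<eta>)) ((b/\<eta>) /\<^sub>R (1/\<eta>))) (\<lambda>x. G ((1/\<eta>) *\<^sub>R x))"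
    by (rule integral_scale_cbox[OF m])
  also have "(a/\<eta>) /\<^sub>R (1/\<eta>) = a" "(b/\<eta>) /\<^sub>R (1/\<eta>) = b" using e by auto
  ultimately have "integral (cbox (a/\<eta>) (b/\<eta>)) G = (1/\<eta>) *\<^sub>R integral (cbox a b) (\<lambda>x. G ((1/\<eta>) *\<^sub>R x))"
    by simp
  moreover have "(\<lambda>x. G ((1/\<eta>) *\<^sub>R x)) = (\<lambda>w. G (w / \<eta>))" by (simp add: divide_inverse mult.commute)
  ultimately show ?thesis by (simp add: scaleR_conv_of_real)
qed


lemma continuous_on_slice:
  assumes "continuous_on (A \<times> B) f" "w \<in> A"
  shows "continuous_on B (\<lambda>u. f (w, u))"
proof -
  have "continuous_on B (\<lambda>u. (w, u))" by (intro continuous_intros)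
  moreover have "(\<lambda>u. (w, u)) ` B \<subseteq> A \<times> B" using assms(2) by auto
  ultimately show ?thesis using continuous_on_compose2[OF assms(1)] by blast
qed

lemma inner_cont:
  fixes aJ thJ :: "real \<times> (real^2) \<Rightarrow> real"
  assumes "continuous_on ({a..b} \<times> sq2 1) aJ" "continuous_on ({a..b} \<times> sq2 1) thJ"
  shows "continuous_on {a..b} (\<lambda>w. integral (sq2 1) (\<lambda>u. of_real (aJ (w,u)) * cis (thJ (w,u))))"
proof -
  have c: "continuous_on ({a..b} \<times> sq2 1) (\<lambda>q. of_real (aJ q) * cis (thJ q))"
    using assms by (intro continuous_intros) auto
  have "continuous_on ({a..b} \<times> sq2 1) (\<lambda>(w,u). of_real (aJ (w,u)) * cis (thJ (w,u)))"
    using c by (simp add: case_prod_beta)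
  then show ?thesis unfolding sq2_def by (rule integral_continuous_on_param)
qed

lemma inner_integrable:
  fixes aJ thJ :: "real \<times> (real^2) \<Rightarrow> real"
  assumes "continuous_on ({a..b} \<times> sq2 1) aJ" "continuous_on ({a..b} \<times> sq2 1) thJ" "w \<in> {a..b}"
  shows "(\<lambda>u. of_real (aJ (w,u)) * cis (thJ (w,u))) integrable_on sq2 1"
proof -
  have c: "continuous_on ({a..b} \<times> sq2 1) (\<lambda>q. of_real (aJ q) * cis (thJ q))"
    using assms by (intro continuous_intros) auto
  show ?thesis unfolding sq2_def
    by (rule integrable_continuous) (use continuous_on_slice[OF c assms(3)] in \<open>simp add: sq2_def\<close>)
qed

lemma sq_diff_factor: "(x::'a::comm_ring_1) * (y * A^2) - x * (y * B^2) = x * y * ((A - B) * (A + B))"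
  by (simp add: algebra_simps power2_eq_square)

lemma assembly:
  fixes aJ thJ aL thL :: "real \<Rightarrow> real \<times> (real^2) \<Rightarrow> real" and P Q :: "real \<Rightarrow> complex"
  assumes ab: "0 \<le> a" "a \<le> b"
    and P: "\<And>\<eta>. 0 < \<eta> \<Longrightarrow> \<eta> \<le> 1 \<Longrightarrow> P \<eta> = integral {a..b} (\<lambda>w. of_real (K/\<eta>) * (of_real (w^2) *
              (integral (sq2 1) (\<lambda>u. of_real (aJ \<eta> (w,u)) * cis (thJ \<eta> (w,u))))^2))"
    and Q: "\<And>\<eta>. 0 < \<eta> \<Longrightarrow> \<eta> \<le> 1 \<Longrightarrow> Q \<eta> = integral {a..b} (\<lambda>w. of_real (K/\<eta>) * (of_real (w^2) *
              (integral (sq2 1) (\<lambda>u. of_real (aL \<eta> (w,u)) * cis (thL \<eta> (w,u))))^2))"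
    and c1: "\<And>\<eta>. 0 < \<eta> \<Longrightarrow> \<eta> \<le> 1 \<Longrightarrow> continuous_on ({a..b} \<times> sq2 1) (aJ \<eta>)"
    and c2: "\<And>\<eta>. 0 < \<eta> \<Longrightarrow> \<eta> \<le> 1 \<Longrightarrow> continuous_on ({a..b} \<times> sq2 1) (thJ \<eta>)"
    and c3: "\<And>\<eta>. 0 < \<eta> \<Longrightarrow> \<eta> \<le> 1 \<Longrightarrow> continuous_on ({a..b} \<times> sq2 1) (aL \<eta>)"
    and c4: "\<And>\<eta>. 0 < \<eta> \<Longrightarrow> \<eta> \<le> 1 \<Longrightarrow> continuous_on ({a..b} \<times> sq2 1) (thL \<eta>)"
    and UA: "UO (\<lambda>\<eta> q. aJ \<eta> q - aL \<eta> q) ({a..b} \<times> sq2 1)"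
    and UT: "UO (\<lambda>\<eta> q. thJ \<eta> q - thL \<eta> q) ({a..b} \<times> sq2 1)"
    and BJ: "UB aJ ({a..b} \<times> sq2 1)" and BL: "UB aL ({a..b} \<times> sq2 1)"
  shows "(\<lambda>\<eta>. P \<eta> - Q \<eta>) \<in> O[at_right 0](\<lambda>_. 1)"
proof -
  define S where "S = {a..b} \<times> sq2 1"
  obtain CA where CA: "\<forall>\<eta> q. 0 < \<eta> \<longrightarrow> \<eta> \<le> 1 \<longrightarrow> q \<in> S \<longrightarrow> \<bar>aJ \<eta> q - aL \<eta> q\<bar> \<le> CA * \<eta>"
    using UO_D[OF UA] unfolding S_def by blast
  obtain CT where CT: "\<forall>\<eta> q. 0 < \<eta> \<longrightarrow> \<eta> \<le> 1 \<longrightarrow> q \<in> S \<longrightarrow> \<bar>thJ \<eta> q - thL \<eta> q\<bar> \<le> CT * \<eta>"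
    using UO_D[OF UT] unfolding S_def by blast
  obtain NJ where NJ: "\<forall>\<eta> q. 0 < \<eta> \<longrightarrow> \<eta> \<le> 1 \<longrightarrow> q \<in> S \<longrightarrow> \<bar>aJ \<eta> q\<bar> \<le> NJ"
    using UB_D[OF BJ] unfolding S_def by blast
  obtain NL where NL: "\<forall>\<eta> q. 0 < \<eta> \<longrightarrow> \<eta> \<le> 1 \<longrightarrow> q \<in> S \<longrightarrow> \<bar>aL \<eta> q\<bar> \<le> NL"
    using UB_D[OF BL] unfolding S_def by blast
  define cs1 where "cs1 = Henstock_Kurzweil_Integration.content (sq2 1)"
  have cs1: "cs1 \<ge> 0" unfolding cs1_def by simp
  define Bd where "Bd = \<bar>K\<bar> * b^2 * (((\<bar>CA\<bar> + \<bar>NL\<bar> * \<bar>CT\<bar>) * cs1) * ((\<bar>NJ\<bar> + \<bar>NL\<bar>) * cs1))"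
  have Bd0: "Bd \<ge> 0" unfolding Bd_def using cs1 by simp
  have main: "norm (P \<eta> - Q \<eta>) \<le> Bd * (b - a)" if e: "0 < \<eta>" "\<eta> \<le> 1" for \<eta>
  proof -
    define fJ where "fJ = (\<lambda>w u. of_real (aJ \<eta> (w,u)) * cis (thJ \<eta> (w,u)))"
    define fL where "fL = (\<lambda>w u. of_real (aL \<eta> (w,u)) * cis (thL \<eta> (w,u)))"
    define J where "J = (\<lambda>w. integral (sq2 1) (fJ w))"
    define L where "L = (\<lambda>w. integral (sq2 1) (fL w))"
    define hJ where "hJ = (\<lambda>w. of_real (K/\<eta>) * (of_real (w^2) * (J w)^2))"
    define hL where "hL = (\<lambda>w. of_real (K/\<eta>) * (of_real (w^2) * (L w)^2))"
    have cJ: "continuous_on {a..b} J" unfolding J_def fJ_def by (rule inner_cont[OF c1[OF e] c2[OF e]])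
    have cL: "continuous_on {a..b} L" unfolding L_def fL_def by (rule inner_cont[OF c3[OF e] c4[OF e]])
    have iJ: "hJ integrable_on {a..b}" unfolding hJ_def
      by (rule integrable_continuous_interval) (intro continuous_intros cJ)
    have iL: "hL integrable_on {a..b}" unfolding hL_def
      by (rule integrable_continuous_interval) (intro continuous_intros cL)
    have PQ: "P \<eta> - Q \<eta> = integral {a..b} (\<lambda>w. hJ w - hL w)"
      unfolding P[OF e] Q[OF e] hJ_def hL_def J_def L_def fJ_def fL_def
      using iJ iL unfolding hJ_def hL_def J_def L_def fJ_def fL_def
      by (simp add: integral_diff)
    have pw: "norm (hJ w - hL w) \<le> Bd" if w: "w \<in> {a..b}" for w
    proof -
      have ifJ: "fJ w integrable_on sq2 1" unfolding fJ_def by (rule inner_integrable[OF c1[OF e] c2[OF e] w])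
      have ifL: "fL w integrable_on sq2 1" unfolding fL_def by (rule inner_integrable[OF c3[OF e] c4[OF e] w])
      have JL: "J w - L w = integral (sq2 1) (\<lambda>u. fJ w u - fL w u)"
        unfolding J_def L_def using ifJ ifL by (simp add: integral_diff)
      have d1: "norm (J w - L w) \<le> ((\<bar>CA\<bar> + \<bar>NL\<bar> * \<bar>CT\<bar>) * \<eta>) * cs1"
        unfolding JL cs1_def sq2_def
      proof (rule has_integral_bound)
        show "0 \<le> (\<bar>CA\<bar> + \<bar>NL\<bar> * \<bar>CT\<bar>) * \<eta>" using e by simp
        show "((\<lambda>u. fJ w u - fL w u) has_integral integral (cbox (\<chi> i. - 1) (\<chi> i. 1)) (\<lambda>u. fJ w u - fL w u)) (cbox (\<chi> i. - 1) (\<chi> i. 1))"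
          using integrable_diff[OF ifJ ifL] unfolding sq2_def by (rule integrable_integral)
      next
        fix u :: "real^2" assume u: "u \<in> cbox (\<chi> i. - 1) (\<chi> i. (1::real))"
        have q: "(w, u) \<in> S" unfolding S_def sq2_def using u w by auto
        have "norm (fJ w u - fL w u) \<le> \<bar>aJ \<eta> (w,u) - aL \<eta> (w,u)\<bar> + \<bar>aL \<eta> (w,u)\<bar> * \<bar>thJ \<eta> (w,u) - thL \<eta> (w,u)\<bar>"
          unfolding fJ_def fL_def by (rule amp_cis_diff_bound)
        also have "\<dots> \<le> \<bar>CA\<bar> * \<eta> + \<bar>NL\<bar> * (\<bar>CT\<bar> * \<eta>)"
        proof (rule add_mono)
          show "\<bar>aJ \<eta> (w,u) - aL \<eta> (w,u)\<bar> \<le> \<bar>CA\<bar> * \<eta>" using CA e q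
            by (meson abs_ge_self dual_order.trans mult_right_mono less_imp_le)
          have "\<bar>aL \<eta> (w,u)\<bar> \<le> \<bar>NL\<bar>" using NL e q by fastforce
          moreover have "\<bar>thJ \<eta> (w,u) - thL \<eta> (w,u)\<bar> \<le> \<bar>CT\<bar> * \<eta>" using CT e q
            by (meson abs_ge_self dual_order.trans mult_right_mono less_imp_le)
          ultimately show "\<bar>aL \<eta> (w,u)\<bar> * \<bar>thJ \<eta> (w,u) - thL \<eta> (w,u)\<bar> \<le> \<bar>NL\<bar> * (\<bar>CT\<bar> * \<eta>)"
            by (intro mult_mono) auto
        qed
        also have "\<dots> = (\<bar>CA\<bar> + \<bar>NL\<bar> * \<bar>CT\<bar>) * \<eta>" by (simp add: algebra_simps)
        finally show "norm (fJ w u - fL w u) \<le> (\<bar>CA\<bar> + \<bar>NL\<bar> * \<bar>CT\<bar>) * \<eta>" .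
      qed
      have bJ: "norm (J w) \<le> \<bar>NJ\<bar> * cs1"
        unfolding J_def cs1_def sq2_def
      proof (rule has_integral_bound)
        show "0 \<le> \<bar>NJ\<bar>" by simp
        show "(fJ w has_integral integral (cbox (\<chi> i. - 1) (\<chi> i. 1)) (fJ w)) (cbox (\<chi> i. - 1) (\<chi> i. 1))"
          using ifJ unfolding sq2_def by (rule integrable_integral)
      next
        fix u :: "real^2" assume u: "u \<in> cbox (\<chi> i. - 1) (\<chi> i. (1::real))"
        have q: "(w, u) \<in> S" unfolding S_def sq2_def using u w by auto
        have "norm (fJ w u) = \<bar>aJ \<eta> (w,u)\<bar>" unfolding fJ_def by (simp add: norm_mult)
        also have "\<dots> \<le> \<bar>NJ\<bar>" using NJ e q by fastforce
        finally show "norm (fJ w u) \<le> \<bar>NJ\<bar>" .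
      qed
      have bL: "norm (L w) \<le> \<bar>NL\<bar> * cs1"
        unfolding L_def cs1_def sq2_def
      proof (rule has_integral_bound)
        show "0 \<le> \<bar>NL\<bar>" by simp
        show "(fL w has_integral integral (cbox (\<chi> i. - 1) (\<chi> i. 1)) (fL w)) (cbox (\<chi> i. - 1) (\<chi> i. 1))"
          using ifL unfolding sq2_def by (rule integrable_integral)
      next
        fix u :: "real^2" assume u: "u \<in> cbox (\<chi> i. - 1) (\<chi> i. (1::real))"
        have q: "(w, u) \<in> S" unfolding S_def sq2_def using u w by auto
        have "norm (fL w u) = \<bar>aL \<eta> (w,u)\<bar>" unfolding fL_def by (simp add: norm_mult)
        also have "\<dots> \<le> \<bar>NL\<bar>" using NL e q by fastforce
        finally show "norm (fL w u) \<le> \<bar>NL\<bar>" .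
      qed
      have sum: "norm (J w + L w) \<le> (\<bar>NJ\<bar> + \<bar>NL\<bar>) * cs1"
        using norm_triangle_ineq[of "J w" "L w"] bJ bL by (simp add: algebra_simps)
      have eq: "hJ w - hL w = of_real (K/\<eta>) * of_real (w^2) * ((J w - L w) * (J w + L w))"
        unfolding hJ_def hL_def by (rule sq_diff_factor)
      have w2: "w^2 \<le> b^2" using w ab by (intro power_mono) auto
      have "norm (hJ w - hL w) = (\<bar>K\<bar> / \<eta>) * w^2 * (norm (J w - L w) * norm (J w + L w))"
        unfolding eq norm_mult norm_of_real using e by simp
      also have "\<dots> \<le> (\<bar>K\<bar> / \<eta>) * b^2 * ((((\<bar>CA\<bar> + \<bar>NL\<bar> * \<bar>CT\<bar>) * \<eta>) * cs1) * ((\<bar>NJ\<bar> + \<bar>NL\<bar>) * cs1))"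
        using d1 sum w2 e cs1 by (intro mult_mono) auto
      also have "\<dots> = Bd" unfolding Bd_def using e by (simp add: field_simps)
      finally show ?thesis .
    qed
    have "norm (integral {a..b} (\<lambda>w. hJ w - hL w)) \<le> Bd * Henstock_Kurzweil_Integration.content (cbox a b)"
    proof (rule has_integral_bound[OF Bd0])
      show "((\<lambda>w. hJ w - hL w) has_integral integral {a..b} (\<lambda>w. hJ w - hL w)) (cbox a b)"
        using integrable_diff[OF iJ iL] by (simp add: integrable_integral)
      show "\<And>x. x \<in> cbox a b \<Longrightarrow> norm (hJ x - hL x) \<le> Bd" using pw by simp
    qed
    then show ?thesis using PQ ab by simp
  qed
  show ?thesis
  proof (rule bigoI[where c = "Bd * (b - a)"])
    have "eventually (\<lambda>x. x \<in> {0<..<1}) (at_right (0::real))" by (rule eventually_at_right_real) simp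
    then show "eventually (\<lambda>\<eta>. norm (P \<eta> - Q \<eta>) \<le> Bd * (b - a) * norm (1::complex)) (at_right 0)"
      by eventually_elim (use main in auto)
  qed
qed


definition dZ :: "real \<Rightarrow> real^2 \<Rightarrow> real \<Rightarrow> real \<Rightarrow> real^2 \<Rightarrow> real" where
  "dZ l0 zp zpar \<eta> u = sqrt (zpar^2 + \<eta> * (norm (zp - l0 *\<^sub>R u))^2)"

lemma dist_parax:
  assumes "\<eta> > 0"
  shows "dist (parax \<eta> zp zpar) ((sqrt \<eta> * l0) *\<^sub>R u, 0) = dZ l0 zp zpar \<eta> u"
proof -
  have "dist (sqrt \<eta> *\<^sub>R zp) ((sqrt \<eta> * l0) *\<^sub>R u) = sqrt \<eta> * norm (zp - l0 *\<^sub>R u)"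
  proof -
    have "sqrt \<eta> *\<^sub>R zp - (sqrt \<eta> * l0) *\<^sub>R u = sqrt \<eta> *\<^sub>R (zp - l0 *\<^sub>R u)"
      by (simp add: scaleR_diff_right)
    then show ?thesis using assms by (simp add: dist_norm)
  qed
  then have "(dist (sqrt \<eta> *\<^sub>R zp) ((sqrt \<eta> * l0) *\<^sub>R u))^2 = \<eta> * (norm (zp - l0 *\<^sub>R u))^2"
    using assms by (simp add: power_mult_distrib)
  then show ?thesis unfolding parax_def dZ_def dist_Pair_Pair by (simp add: add.commute)
qed

lemma dZ_pos: "zpar > 0 \<Longrightarrow> \<eta> > 0 \<Longrightarrow> dZ l0 zp zpar \<eta> u > 0"
  unfolding dZ_def by (intro real_sqrt_gt_zero add_pos_nonneg) auto

definition aJ :: "real \<Rightarrow> real^2 \<Rightarrow> real \<Rightarrow> real^2 \<Rightarrow> real \<Rightarrow> real \<Rightarrow> real \<times> (real^2) \<Rightarrow> real" where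
  "aJ l0 zp zpar yp ypar \<eta> q = 1 / (16 * pi^2) * (1 / dZ l0 zp zpar \<eta> (snd q) * (1 / dZ l0 yp ypar \<eta> (snd q)))"

definition thJ :: "real \<Rightarrow> real \<Rightarrow> real \<Rightarrow> real^2 \<Rightarrow> real \<Rightarrow> real^2 \<Rightarrow> real \<Rightarrow> real \<Rightarrow> real \<times> (real^2) \<Rightarrow> real" where
  "thJ c cs l0 zp zpar yp ypar \<eta> q = fst q / \<eta> / c * dZ l0 zp zpar \<eta> (snd q) - fst q / \<eta> / cs * dZ l0 yp ypar \<eta> (snd q)"

lemma psf_rep:
  assumes e: "\<eta> > 0" and zpar: "zpar > 0" and ypar: "ypar > 0" and l0: "l0 > 0"
  shows "psf c cs (sqrt \<eta> * l0) {a / \<eta> .. b / \<eta>} (parax \<eta> zp zpar) (parax \<eta> yp ypar)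
     = integral {a..b} (\<lambda>w. of_real (l0^4/\<eta>) * (of_real (w^2) *
              (integral (sq2 1) (\<lambda>u. of_real (aJ l0 zp zpar yp ypar \<eta> (w,u)) * cis (thJ c cs l0 zp zpar yp ypar \<eta> (w,u))))^2))"
proof -
  define m where "m = sqrt \<eta> * l0"
  have m: "m > 0" unfolding m_def using e l0 by simp
  have m2: "m^2 = \<eta> * l0^2" unfolding m_def using e by (simp add: power_mult_distrib)
  define z where "z = parax \<eta> zp zpar"
  define y where "y = parax \<eta> yp ypar"
  have inner: "integral (sq2 m) (\<lambda>xr. Gamma3 (\<omega> / c) z (xr, 0) * cnj (Gamma3 (\<omega> / cs) y (xr, 0)))
     = of_real (m^2) * integral (sq2 1) (\<lambda>u. of_real (aJ l0 zp zpar yp ypar \<eta> (\<omega> * \<eta>, u)) * cis (thJ c cs l0 zp zpar yp ypar \<eta> (\<omega> * \<eta>, u)))"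
    for \<omega>
  proof -
    have "integral (sq2 m) (\<lambda>xr. Gamma3 (\<omega> / c) z (xr, 0) * cnj (Gamma3 (\<omega> / cs) y (xr, 0)))
      = of_real (m^2) * integral (sq2 1) (\<lambda>u. Gamma3 (\<omega> / c) z (m *\<^sub>R u, 0) * cnj (Gamma3 (\<omega> / cs) y (m *\<^sub>R u, 0)))"
      by (rule integral_sq2_scale[OF m])
    also have "integral (sq2 1) (\<lambda>u. Gamma3 (\<omega> / c) z (m *\<^sub>R u, 0) * cnj (Gamma3 (\<omega> / cs) y (m *\<^sub>R u, 0)))
      = integral (sq2 1) (\<lambda>u. of_real (aJ l0 zp zpar yp ypar \<eta> (\<omega> * \<eta>, u)) * cis (thJ c cs l0 zp zpar yp ypar \<eta> (\<omega> * \<eta>, u)))"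
    proof (rule integral_cong)
      fix u
      have dz: "dist z (m *\<^sub>R u, 0) = dZ l0 zp zpar \<eta> u" unfolding z_def m_def by (rule dist_parax[OF e])
      have dy: "dist y (m *\<^sub>R u, 0) = dZ l0 yp ypar \<eta> u" unfolding y_def m_def by (rule dist_parax[OF e])
      have p1: "dist z (m *\<^sub>R u, 0) > 0" unfolding dz by (rule dZ_pos[OF zpar e])
      have p2: "dist y (m *\<^sub>R u, 0) > 0" unfolding dy by (rule dZ_pos[OF ypar e])
      show "Gamma3 (\<omega> / c) z (m *\<^sub>R u, 0) * cnj (Gamma3 (\<omega> / cs) y (m *\<^sub>R u, 0))
          = of_real (aJ l0 zp zpar yp ypar \<eta> (\<omega> * \<eta>, u)) * cis (thJ c cs l0 zp zpar yp ypar \<eta> (\<omega> * \<eta>, u))"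
        unfolding Gamma_prod[OF p1 p2] dz dy aJ_def thJ_def using e by simp
    qed
    finally show ?thesis .
  qed
  have "psf c cs m {a / \<eta> .. b / \<eta>} z y = integral {a / \<eta> .. b / \<eta>} (\<lambda>\<omega>. of_real (\<omega>^2) *
       (of_real (m^2) * integral (sq2 1) (\<lambda>u. of_real (aJ l0 zp zpar yp ypar \<eta> (\<omega> * \<eta>, u)) * cis (thJ c cs l0 zp zpar yp ypar \<eta> (\<omega> * \<eta>, u))))^2)"
    unfolding psf_def inner ..
  also have "\<dots> = of_real (1/\<eta>) * integral {a..b} (\<lambda>w. of_real ((w/\<eta>)^2) *
       (of_real (m^2) * integral (sq2 1) (\<lambda>u. of_real (aJ l0 zp zpar yp ypar \<eta> (w / \<eta> * \<eta>, u)) * cis (thJ c cs l0 zp zpar yp ypar \<eta> (w / \<eta> * \<eta>, u))))^2)"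
    by (rule integral_interval_scale[OF e])
  also have "\<dots> = integral {a..b} (\<lambda>w. of_real (1/\<eta>) * (of_real ((w/\<eta>)^2) *
       (of_real (m^2) * integral (sq2 1) (\<lambda>u. of_real (aJ l0 zp zpar yp ypar \<eta> (w, u)) * cis (thJ c cs l0 zp zpar yp ypar \<eta> (w, u))))^2))"
    using e by simp
  also have "\<dots> = integral {a..b} (\<lambda>w. of_real (l0^4/\<eta>) * (of_real (w^2) *
              (integral (sq2 1) (\<lambda>u. of_real (aJ l0 zp zpar yp ypar \<eta> (w,u)) * cis (thJ c cs l0 zp zpar yp ypar \<eta> (w,u))))^2))"
  proof (rule integral_cong)
    fix w
    define I where "I = integral (sq2 1) (\<lambda>u. of_real (aJ l0 zp zpar yp ypar \<eta> (w, u)) * cis (thJ c cs l0 zp zpar yp ypar \<eta> (w, u)))"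
    have "(of_real (1/\<eta>) * (of_real ((w/\<eta>)^2) * (of_real (m^2) * I)^2) :: complex)
        = of_real ((1/\<eta>) * (w/\<eta>)^2 * (m^2)^2) * I^2"
      by (simp add: power_mult_distrib)
    also have "(1/\<eta>) * (w/\<eta>)^2 * (m^2)^2 = l0^4/\<eta> * w^2" unfolding m2 using e
      by (simp add: power2_eq_square field_simps) (simp add: power4_eq_xxxx)
    finally show "of_real (1/\<eta>) * (of_real ((w/\<eta>)^2) * (of_real (m^2) * I)^2) = of_real (l0^4/\<eta>) * (of_real (w^2) * I^2)"
      by (simp only: of_real_mult mult.assoc)
  qed
  finally show ?thesis unfolding m_def z_def y_def .
qed


lemma lead_generic:
  fixes A1 A2 X2 :: "real \<Rightarrow> real" and X1 :: "real \<Rightarrow> real^2"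
  assumes K: "Kc = l0^4/\<eta> * aL^2"
  shows "of_real Kc * integral {a..b} (\<lambda>\<omega>. of_real (\<omega>^2) * cis (A1 \<omega>) * cis (A2 \<omega>) * (GG (X1 \<omega>) (X2 \<omega>))^2)
    = integral {a..b} (\<lambda>w. of_real (l0^4/\<eta>) * (of_real (w^2) *
         (integral (sq2 1) (\<lambda>u. of_real aL * cis (A1 w / 2 + A2 w / 2 + (- (u \<bullet> X1 w) + (norm u)^2 / 2 * X2 w))))^2))"
proof -
  have "of_real Kc * integral {a..b} (\<lambda>\<omega>. of_real (\<omega>^2) * cis (A1 \<omega>) * cis (A2 \<omega>) * (GG (X1 \<omega>) (X2 \<omega>))^2)
     = integral {a..b} (\<lambda>\<omega>. of_real Kc * (of_real (\<omega>^2) * cis (A1 \<omega>) * cis (A2 \<omega>) * (GG (X1 \<omega>) (X2 \<omega>))^2))"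
    by simp
  also have "\<dots> = integral {a..b} (\<lambda>w. of_real (l0^4/\<eta>) * (of_real (w^2) *
         (integral (sq2 1) (\<lambda>u. of_real aL * cis (A1 w / 2 + A2 w / 2 + (- (u \<bullet> X1 w) + (norm u)^2 / 2 * X2 w))))^2))"
  proof (rule integral_cong)
    fix w
    define \<beta> where "\<beta> = A1 w / 2 + A2 w / 2"
    have "integral (sq2 1) (\<lambda>u. of_real aL * cis (\<beta> + (- (u \<bullet> X1 w) + (norm u)^2 / 2 * X2 w)))
        = integral (sq2 1) (\<lambda>u. (of_real aL * cis \<beta>) * cis (- (u \<bullet> X1 w) + (norm u)^2 / 2 * X2 w))"
      by (simp add: cis_mult[symmetric] mult.assoc)
    also have "\<dots> = of_real aL * cis \<beta> * GG (X1 w) (X2 w)"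
      unfolding GG_def by (rule integral_mult_right)
    finally have I: "integral (sq2 1) (\<lambda>u. of_real aL * cis (\<beta> + (- (u \<bullet> X1 w) + (norm u)^2 / 2 * X2 w)))
        = of_real aL * cis \<beta> * GG (X1 w) (X2 w)" .
    have cb: "cis \<beta> * cis \<beta> = cis (A1 w) * cis (A2 w)"
      unfolding cis_mult \<beta>_def by simp
    have "of_real Kc * (of_real (w^2) * cis (A1 w) * cis (A2 w) * (GG (X1 w) (X2 w))^2)
        = of_real (l0^4/\<eta>) * (of_real (w^2) * (of_real aL * cis \<beta> * GG (X1 w) (X2 w))^2)"
      unfolding K of_real_mult of_real_power power2_eq_square
      using cb by (simp add: algebra_simps)
    then show "of_real Kc * (of_real (w^2) * cis (A1 w) * cis (A2 w) * (GG (X1 w) (X2 w))^2)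
        = of_real (l0^4/\<eta>) * (of_real (w^2) *
         (integral (sq2 1) (\<lambda>u. of_real aL * cis (A1 w / 2 + A2 w / 2 + (- (u \<bullet> X1 w) + (norm u)^2 / 2 * X2 w))))^2)"
      using I unfolding \<beta>_def by (simp only:)
  qed
  finally show ?thesis .
qed


definition nrm :: "real^2 \<Rightarrow> real \<Rightarrow> real \<Rightarrow> real" where
  "nrm v p \<eta> = sqrt (p^2 + \<eta> * (norm v)^2)"

definition nS :: "real \<Rightarrow> real^2 \<Rightarrow> real \<Rightarrow> real \<Rightarrow> real" where
  "nS r v p \<eta> = sqrt ((r * p)^2 + \<eta> * (r^4 * (norm v)^2))"

lemma norm_parax: "\<eta> > 0 \<Longrightarrow> norm (parax \<eta> v p) = nrm v p \<eta>"
  unfolding parax_def nrm_def norm_Pair by (simp add: power_mult_distrib add.commute)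

lemma norm_phi: "\<eta> > 0 \<Longrightarrow> norm (phi c cs (parax \<eta> v p)) = nS (c/cs) v p \<eta>"
  unfolding parax_def nS_def norm_Pair phi_def
  by (simp add: power_mult_distrib add.commute abs_mult power2_eq_square power4_eq_xxxx mult_ac)

lemma norm_phi_inv: "\<eta> > 0 \<Longrightarrow> norm (phi_inv c cs (parax \<eta> v p)) = nS (cs/c) v p \<eta>"
  unfolding parax_def nS_def norm_Pair phi_inv_def
  by (simp add: power_mult_distrib add.commute abs_mult power2_eq_square power4_eq_xxxx mult_ac)

lemma perp_parax: "\<eta> > 0 \<Longrightarrow> perp \<eta> (parax \<eta> v p) = v"
  unfolding perp_def parax_def by simp

lemma perp_phi: "\<eta> > 0 \<Longrightarrow> perp \<eta> (phi c cs (parax \<eta> v p)) = (c/cs)^2 *\<^sub>R v"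
  unfolding perp_def parax_def phi_def by simp

lemma perp_phi_inv: "\<eta> > 0 \<Longrightarrow> perp \<eta> (phi_inv c cs (parax \<eta> v p)) = (cs/c)^2 *\<^sub>R v"
  unfolding perp_def parax_def phi_inv_def by simp

lemma norm_scale_sq: "(norm (r^2 *\<^sub>R v))^2 = r^4 * (norm v)^2"
  by (simp add: power_mult_distrib power2_eq_square power4_eq_xxxx)

lemma nrm_pos: "p > 0 \<Longrightarrow> \<eta> > 0 \<Longrightarrow> nrm v p \<eta> > 0"
  unfolding nrm_def by (intro real_sqrt_gt_zero add_pos_nonneg) auto

lemma nS_pos: "p > 0 \<Longrightarrow> r > 0 \<Longrightarrow> \<eta> > 0 \<Longrightarrow> nS r v p \<eta> > 0"
  unfolding nS_def by (intro real_sqrt_gt_zero add_pos_nonneg) auto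

definition aL1 :: "real \<Rightarrow> real \<Rightarrow> real^2 \<Rightarrow> real \<Rightarrow> real^2 \<Rightarrow> real \<Rightarrow> real \<Rightarrow> real \<times> (real^2) \<Rightarrow> real" where
  "aL1 c cs zp zpar yp ypar \<eta> q = 1 / (16 * pi^2) * (1 / nrm zp zpar \<eta> * (c/cs * (1 / nS (c/cs) yp ypar \<eta>)))"

definition thL1 :: "real \<Rightarrow> real \<Rightarrow> real \<Rightarrow> real^2 \<Rightarrow> real \<Rightarrow> real^2 \<Rightarrow> real \<Rightarrow> real \<Rightarrow> real \<times> (real^2) \<Rightarrow> real" where
  "thL1 c cs l0 zp zpar yp ypar \<eta> q =
    (let w = fst q; u = snd q; nz = nrm zp zpar \<eta>; np = nS (c/cs) yp ypar \<eta> in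
     (2*w/(\<eta>*c)*(nz-np))/2 + (w/c*(1-(cs/c)^2)*((c/cs)^4*(norm yp)^2)/np)/2
       + (-((w*l0/c)*((1/nz)*(u \<bullet> zp) - (1/np)*((c/cs)^2*(u \<bullet> yp)))) + (norm u)^2/2*(w*l0^2/c*(1/nz - (c/cs)^2*(1/np)))))"

lemma lead1_rep:
  assumes e: "\<eta> > 0" and zpar: "zpar > 0" and ypar: "ypar > 0" and c: "c > 0" and cs: "cs > 0"
  shows "lead1 c cs l0 {a..b} \<eta> (parax \<eta> zp zpar) (parax \<eta> yp ypar)
     = integral {a..b} (\<lambda>w. of_real (l0^4/\<eta>) * (of_real (w^2) *
              (integral (sq2 1) (\<lambda>u. of_real (aL1 c cs zp zpar yp ypar \<eta> (w,u)) * cis (thL1 c cs l0 zp zpar yp ypar \<eta> (w,u))))^2))"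
proof -
  define nz where "nz = nrm zp zpar \<eta>"
  define np where "np = nS (c/cs) yp ypar \<eta>"
  have nz: "nz > 0" unfolding nz_def by (rule nrm_pos[OF zpar e])
  have np: "np > 0" unfolding np_def by (rule nS_pos[OF ypar _ e]) (use c cs in simp)
  define aL where "aL = 1 / (16 * pi^2) * (1 / nz * (c/cs * (1 / np)))"
  have "lead1 c cs l0 {a..b} \<eta> (parax \<eta> zp zpar) (parax \<eta> yp ypar)
     = of_real (inverse \<eta> * (c / cs)^2 * l0^4 / (16 * pi^2 * nz * np)^2) *
       integral {a..b} (\<lambda>\<omega>. of_real (\<omega>^2) *
        cis (2 * \<omega> / (\<eta> * c) * (nz - np)) *
        cis (\<omega> / c * (1 - (cs / c)^2) * (norm ((c/cs)^2 *\<^sub>R yp))^2 / np) *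
        (GG ((\<omega> * l0 / c) *\<^sub>R ((1 / nz) *\<^sub>R zp - (1 / np) *\<^sub>R ((c/cs)^2 *\<^sub>R yp)))
            (\<omega> * l0^2 / c * (1 / nz - (c / cs)^2 * (1 / np))))^2)"
    unfolding lead1_def Let_def norm_parax[OF e] norm_phi[OF e] perp_parax[OF e] perp_phi[OF e] nz_def np_def ..
  also have "\<dots> = integral {a..b} (\<lambda>w. of_real (l0^4/\<eta>) * (of_real (w^2) *
         (integral (sq2 1) (\<lambda>u. of_real aL * cis ((2 * w / (\<eta> * c) * (nz - np)) / 2 + (w / c * (1 - (cs / c)^2) * (norm ((c/cs)^2 *\<^sub>R yp))^2 / np) / 2
             + (- (u \<bullet> ((w * l0 / c) *\<^sub>R ((1 / nz) *\<^sub>R zp - (1 / np) *\<^sub>R ((c/cs)^2 *\<^sub>R yp)))) + (norm u)^2 / 2 * (w * l0^2 / c * (1 / nz - (c / cs)^2 * (1 / np)))))))^2))"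
    by (rule lead_generic) (use nz np in \<open>simp add: aL_def field_simps power2_eq_square\<close>)
  also have "\<dots> = integral {a..b} (\<lambda>w. of_real (l0^4/\<eta>) * (of_real (w^2) *
              (integral (sq2 1) (\<lambda>u. of_real (aL1 c cs zp zpar yp ypar \<eta> (w,u)) * cis (thL1 c cs l0 zp zpar yp ypar \<eta> (w,u))))^2))"
  proof (rule integral_cong, goal_cases)
    case (1 w)
    have "integral (sq2 1) (\<lambda>u. of_real aL * cis ((2 * w / (\<eta> * c) * (nz - np)) / 2 + (w / c * (1 - (cs / c)^2) * (norm ((c/cs)^2 *\<^sub>R yp))^2 / np) / 2
             + (- (u \<bullet> ((w * l0 / c) *\<^sub>R ((1 / nz) *\<^sub>R zp - (1 / np) *\<^sub>R ((c/cs)^2 *\<^sub>R yp)))) + (norm u)^2 / 2 * (w * l0^2 / c * (1 / nz - (c / cs)^2 * (1 / np))))))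
      = integral (sq2 1) (\<lambda>u. of_real (aL1 c cs zp zpar yp ypar \<eta> (w,u)) * cis (thL1 c cs l0 zp zpar yp ypar \<eta> (w,u)))"
    proof (rule integral_cong)
      fix u :: "real^2"
      have "(2 * w / (\<eta> * c) * (nz - np)) / 2 + (w / c * (1 - (cs / c)^2) * (norm ((c/cs)^2 *\<^sub>R yp))^2 / np) / 2
             + (- (u \<bullet> ((w * l0 / c) *\<^sub>R ((1 / nz) *\<^sub>R zp - (1 / np) *\<^sub>R ((c/cs)^2 *\<^sub>R yp)))) + (norm u)^2 / 2 * (w * l0^2 / c * (1 / nz - (c / cs)^2 * (1 / np))))
          = thL1 c cs l0 zp zpar yp ypar \<eta> (w,u)"
        unfolding thL1_def Let_def nz_def[symmetric] np_def[symmetric] norm_scale_sq fst_conv snd_conv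
        by (simp add: inner_diff_right)
      then show "of_real aL * cis ((2 * w / (\<eta> * c) * (nz - np)) / 2 + (w / c * (1 - (cs / c)^2) * (norm ((c/cs)^2 *\<^sub>R yp))^2 / np) / 2
             + (- (u \<bullet> ((w * l0 / c) *\<^sub>R ((1 / nz) *\<^sub>R zp - (1 / np) *\<^sub>R ((c/cs)^2 *\<^sub>R yp)))) + (norm u)^2 / 2 * (w * l0^2 / c * (1 / nz - (c / cs)^2 * (1 / np)))))
          = of_real (aL1 c cs zp zpar yp ypar \<eta> (w,u)) * cis (thL1 c cs l0 zp zpar yp ypar \<eta> (w,u))"
        unfolding aL1_def aL_def nz_def np_def by simp
    qed
    then show ?case by simp
  qed
  finally show ?thesis .
qed


definition aL2 :: "real \<Rightarrow> real \<Rightarrow> real^2 \<Rightarrow> real \<Rightarrow> real^2 \<Rightarrow> real \<Rightarrow> real \<Rightarrow> real \<times> (real^2) \<Rightarrow> real" where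
  "aL2 c cs zp zpar yp ypar \<eta> q = 1 / (16 * pi^2) * (1 / nrm yp ypar \<eta> * (cs/c * (1 / nS (cs/c) zp zpar \<eta>)))"

definition thL2 :: "real \<Rightarrow> real \<Rightarrow> real \<Rightarrow> real^2 \<Rightarrow> real \<Rightarrow> real^2 \<Rightarrow> real \<Rightarrow> real \<Rightarrow> real \<times> (real^2) \<Rightarrow> real" where
  "thL2 c cs l0 zp zpar yp ypar \<eta> q =
    (let w = fst q; u = snd q; nq = nS (cs/c) zp zpar \<eta>; ny = nrm yp ypar \<eta> in
     (2*w/(\<eta>*cs)*(nq-ny))/2 + (w/cs*((c/cs)^2-1)*((cs/c)^4*(norm zp)^2)/nq)/2
       + (-((w*l0/cs)*((1/nq)*((cs/c)^2*(u \<bullet> zp)) - (1/ny)*(u \<bullet> yp))) + (norm u)^2/2*(w*l0^2/cs*((cs/c)^2*(1/nq) - 1/ny))))"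

lemma lead2_rep:
  assumes e: "\<eta> > 0" and zpar: "zpar > 0" and ypar: "ypar > 0" and c: "c > 0" and cs: "cs > 0"
  shows "lead2 c cs l0 {a..b} \<eta> (parax \<eta> zp zpar) (parax \<eta> yp ypar)
     = integral {a..b} (\<lambda>w. of_real (l0^4/\<eta>) * (of_real (w^2) *
              (integral (sq2 1) (\<lambda>u. of_real (aL2 c cs zp zpar yp ypar \<eta> (w,u)) * cis (thL2 c cs l0 zp zpar yp ypar \<eta> (w,u))))^2))"
proof -
  define nq where "nq = nS (cs/c) zp zpar \<eta>"
  define ny where "ny = nrm yp ypar \<eta>"
  have ny: "ny > 0" unfolding ny_def by (rule nrm_pos[OF ypar e])
  have nq: "nq > 0" unfolding nq_def by (rule nS_pos[OF zpar _ e]) (use c cs in simp)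
  define aL where "aL = 1 / (16 * pi^2) * (1 / ny * (cs/c * (1 / nq)))"
  have "lead2 c cs l0 {a..b} \<eta> (parax \<eta> zp zpar) (parax \<eta> yp ypar)
     = of_real (inverse \<eta> * (cs / c)^2 * l0^4 / (16 * pi^2 * ny * nq)^2) *
       integral {a..b} (\<lambda>\<omega>. of_real (\<omega>^2) *
        cis (2 * \<omega> / (\<eta> * cs) * (nq - ny)) *
        cis (\<omega> / cs * ((c / cs)^2 - 1) * (norm ((cs/c)^2 *\<^sub>R zp))^2 / nq) *
        (GG ((\<omega> * l0 / cs) *\<^sub>R ((1 / nq) *\<^sub>R ((cs/c)^2 *\<^sub>R zp) - (1 / ny) *\<^sub>R yp))
            (\<omega> * l0^2 / cs * ((cs / c)^2 * (1 / nq) - 1 / ny)))^2)"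
    unfolding lead2_def Let_def norm_parax[OF e] norm_phi_inv[OF e] perp_parax[OF e] perp_phi_inv[OF e] nq_def ny_def ..
  also have "\<dots> = integral {a..b} (\<lambda>w. of_real (l0^4/\<eta>) * (of_real (w^2) *
         (integral (sq2 1) (\<lambda>u. of_real aL * cis ((2 * w / (\<eta> * cs) * (nq - ny)) / 2 + (w / cs * ((c / cs)^2 - 1) * (norm ((cs/c)^2 *\<^sub>R zp))^2 / nq) / 2
             + (- (u \<bullet> ((w * l0 / cs) *\<^sub>R ((1 / nq) *\<^sub>R ((cs/c)^2 *\<^sub>R zp) - (1 / ny) *\<^sub>R yp))) + (norm u)^2 / 2 * (w * l0^2 / cs * ((cs / c)^2 * (1 / nq) - 1 / ny))))))^2))"
    by (rule lead_generic) (use nq ny in \<open>simp add: aL_def field_simps power2_eq_square\<close>)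
  also have "\<dots> = integral {a..b} (\<lambda>w. of_real (l0^4/\<eta>) * (of_real (w^2) *
              (integral (sq2 1) (\<lambda>u. of_real (aL2 c cs zp zpar yp ypar \<eta> (w,u)) * cis (thL2 c cs l0 zp zpar yp ypar \<eta> (w,u))))^2))"
  proof (rule integral_cong, goal_cases)
    case (1 w)
    have "integral (sq2 1) (\<lambda>u. of_real aL * cis ((2 * w / (\<eta> * cs) * (nq - ny)) / 2 + (w / cs * ((c / cs)^2 - 1) * (norm ((cs/c)^2 *\<^sub>R zp))^2 / nq) / 2
             + (- (u \<bullet> ((w * l0 / cs) *\<^sub>R ((1 / nq) *\<^sub>R ((cs/c)^2 *\<^sub>R zp) - (1 / ny) *\<^sub>R yp))) + (norm u)^2 / 2 * (w * l0^2 / cs * ((cs / c)^2 * (1 / nq) - 1 / ny)))))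
      = integral (sq2 1) (\<lambda>u. of_real (aL2 c cs zp zpar yp ypar \<eta> (w,u)) * cis (thL2 c cs l0 zp zpar yp ypar \<eta> (w,u)))"
    proof (rule integral_cong)
      fix u :: "real^2"
      have "(2 * w / (\<eta> * cs) * (nq - ny)) / 2 + (w / cs * ((c / cs)^2 - 1) * (norm ((cs/c)^2 *\<^sub>R zp))^2 / nq) / 2
             + (- (u \<bullet> ((w * l0 / cs) *\<^sub>R ((1 / nq) *\<^sub>R ((cs/c)^2 *\<^sub>R zp) - (1 / ny) *\<^sub>R yp))) + (norm u)^2 / 2 * (w * l0^2 / cs * ((cs / c)^2 * (1 / nq) - 1 / ny)))
          = thL2 c cs l0 zp zpar yp ypar \<eta> (w,u)"
        unfolding thL2_def Let_def nq_def[symmetric] ny_def[symmetric] norm_scale_sq fst_conv snd_conv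
        by (simp add: inner_diff_right)
      then show "of_real aL * cis ((2 * w / (\<eta> * cs) * (nq - ny)) / 2 + (w / cs * ((c / cs)^2 - 1) * (norm ((cs/c)^2 *\<^sub>R zp))^2 / nq) / 2
             + (- (u \<bullet> ((w * l0 / cs) *\<^sub>R ((1 / nq) *\<^sub>R ((cs/c)^2 *\<^sub>R zp) - (1 / ny) *\<^sub>R yp))) + (norm u)^2 / 2 * (w * l0^2 / cs * ((cs / c)^2 * (1 / nq) - 1 / ny))))
          = of_real (aL2 c cs zp zpar yp ypar \<eta> (w,u)) * cis (thL2 c cs l0 zp zpar yp ypar \<eta> (w,u))"
        unfolding aL2_def aL_def nq_def ny_def by simp
    qed
    then show ?case by simp
  qed
  finally show ?thesis .
qed


lemma th_identity1:
  fixes w \<eta> c cs zpar ypar nz np dz dy l0 uz uy U2 Z2 Y2 A B :: real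
  assumes nz0: "\<eta> \<noteq> 0" "c \<noteq> 0" "cs \<noteq> 0" "zpar \<noteq> 0" "ypar \<noteq> 0" "nz \<noteq> 0" "np \<noteq> 0"
    and A: "A = Z2 - 2 * l0 * uz + l0^2 * U2" and B: "B = Y2 - 2 * l0 * uy + l0^2 * U2"
  shows "(w/\<eta>/c) * dz - (w/\<eta>/cs) * dy
    - ((2*w/(\<eta>*c)*(nz-np))/2 + (w/c*(1-(cs/c)^2)*((c/cs)^4*Y2)/np)/2
       + (-((w*l0/c)*((1/nz)*uz - (1/np)*((c/cs)^2*uy))) + U2/2*(w*l0^2/c*(1/nz - (c/cs)^2*(1/np)))))
  = (w/c)/\<eta>*(dz - zpar - \<eta>*A/(2*zpar)) - (w/cs)/\<eta>*(dy - ypar - \<eta>*B/(2*ypar))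
    - (w/c)/\<eta>*(nz - zpar - \<eta>*Z2/(2*zpar))
    + (w/c)/\<eta>*(np - c/cs*ypar - \<eta>*((c/cs)^4*Y2)/(2*(c/cs*ypar)))
    + (w*l0*uz/c - w*l0^2*U2/(2*c))*(1/nz - 1/zpar)
    + (-(w/(2*c))*((c/cs)^4-(c/cs)^2)*Y2 - (w*l0/c)*(c/cs)^2*uy + w*l0^2*(c/cs)^2*U2/(2*c))*(1/np - 1/(c/cs*ypar))"
  unfolding A B using nz0 by (simp add: field_simps power2_eq_square power4_eq_xxxx)

lemma th_identity2:
  fixes w \<eta> c cs zpar ypar nq ny dz dy l0 uz uy U2 Z2 Y2 A B :: real
  assumes nz0: "\<eta> \<noteq> 0" "c \<noteq> 0" "cs \<noteq> 0" "zpar \<noteq> 0" "ypar \<noteq> 0" "nq \<noteq> 0" "ny \<noteq> 0"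
    and A: "A = Z2 - 2 * l0 * uz + l0^2 * U2" and B: "B = Y2 - 2 * l0 * uy + l0^2 * U2"
  shows "(w/\<eta>/c) * dz - (w/\<eta>/cs) * dy
    - ((2*w/(\<eta>*cs)*(nq-ny))/2 + (w/cs*((c/cs)^2-1)*((cs/c)^4*Z2)/nq)/2
       + (-((w*l0/cs)*((1/nq)*((cs/c)^2*uz) - (1/ny)*uy)) + U2/2*(w*l0^2/cs*((cs/c)^2*(1/nq) - 1/ny))))
  = (w/c)/\<eta>*(dz - zpar - \<eta>*A/(2*zpar)) - (w/cs)/\<eta>*(dy - ypar - \<eta>*B/(2*ypar))
    - (w/cs)/\<eta>*(nq - cs/c*zpar - \<eta>*((cs/c)^4*Z2)/(2*(cs/c*zpar)))
    + (w/cs)/\<eta>*(ny - ypar - \<eta>*Y2/(2*ypar))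
    + (-(w/(2*cs))*((cs/c)^2-(cs/c)^4)*Z2 + (w*l0/cs)*(cs/c)^2*uz - w*l0^2*(cs/c)^2*U2/(2*cs))*(1/nq - 1/(cs/c*zpar))
    + (-(w*l0/cs)*uy + U2*w*l0^2/(2*cs))*(1/ny - 1/ypar)"
  unfolding A B using nz0 by (simp add: field_simps power2_eq_square power4_eq_xxxx)

lemma sq2_norm: "u \<in> sq2 1 \<Longrightarrow> norm (u :: real^2) \<le> 2"
proof -
  assume u: "u \<in> sq2 1"
  have "\<And>i. \<bar>u $ i\<bar> \<le> 1" using u unfolding sq2_def mem_box_cart by (simp add: abs_le_iff)
  then have "(\<Sum>i\<in>UNIV. \<bar>u $ i\<bar>) \<le> (\<Sum>i\<in>(UNIV::2 set). 1)" by (intro sum_mono) auto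
  also have "\<dots> = 2" by simp
  finally show ?thesis using norm_le_l1_cart[of u] by linarith
qed

lemma norm_diff_sq: "(norm (v - l0 *\<^sub>R u))^2 = (norm v)^2 - 2 * l0 * (u \<bullet> v) + l0^2 * (norm u)^2"
proof -
  have "(norm (v - l0 *\<^sub>R u))^2 = (v - l0 *\<^sub>R u) \<bullet> (v - l0 *\<^sub>R u)" by (simp only: power2_norm_eq_inner)
  also have "\<dots> = v \<bullet> v - 2 * l0 * (u \<bullet> v) + l0^2 * (u \<bullet> u)"
    by (simp add: inner_diff_left inner_diff_right inner_commute power2_eq_square algebra_simps)
  finally show ?thesis by (simp only: power2_norm_eq_inner)
qed

lemma UB_div_const: "UB f S \<Longrightarrow> UB (\<lambda>\<eta> q. f \<eta> q / d) S"
  using UB_mult[of f S "\<lambda>_ _. 1/d"] UB_const[of "1/d" S] by simp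

context
  fixes a b :: real
  assumes ab: "0 \<le> a" "a \<le> b"
begin

lemma UB_w: "UB (\<lambda>\<eta> q. fst q / c) ({a..b} \<times> sq2 1)"
proof (rule UB_I[where M="b / \<bar>c\<bar>"])
  fix \<eta> :: real and q :: "real \<times> (real^2)" assume "q \<in> {a..b} \<times> sq2 1"
  then have "\<bar>fst q\<bar> \<le> b" using ab by auto
  then show "\<bar>fst q / c\<bar> \<le> b / \<bar>c\<bar>" by (simp add: abs_divide divide_right_mono)
qed

lemma UB_fst: "UB (\<lambda>\<eta> q. fst q) ({a..b} \<times> sq2 (1::real))"
proof (rule UB_I[where M="b"])
  fix \<eta> :: real and q :: "real \<times> (real^2)" assume "q \<in> {a..b} \<times> sq2 1"
  then show "\<bar>fst q\<bar> \<le> b" using ab by auto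
qed

lemma UB_uv: "UB (\<lambda>\<eta> q. snd q \<bullet> v) ({a..b} \<times> sq2 (1::real))"
proof (rule UB_I[where M="2 * norm v"])
  fix \<eta> :: real and q :: "real \<times> (real^2)" assume "q \<in> {a..b} \<times> sq2 1"
  then have "norm (snd q) \<le> 2" using sq2_norm by auto
  then show "\<bar>snd q \<bullet> v\<bar> \<le> 2 * norm v"
    using Cauchy_Schwarz_ineq2[of "snd q" v] by (meson mult_right_mono norm_ge_zero order_trans)
qed

lemma UB_U2: "UB (\<lambda>\<eta> q. (norm (snd q))^2) ({a..b} \<times> sq2 (1::real))"
proof (rule UB_I[where M="4"])
  fix \<eta> :: real and q :: "real \<times> (real^2)" assume "q \<in> {a..b} \<times> sq2 1"
  then have "norm (snd q) \<le> 2" using sq2_norm by auto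
  then have "(norm (snd q))^2 \<le> 2^2" by (intro power_mono) auto
  then show "\<bar>(norm (snd q))^2\<bar> \<le> 4" by simp
qed

lemma UB_A: "UB (\<lambda>\<eta> q. (norm (v - l0 *\<^sub>R snd q))^2) ({a..b} \<times> sq2 (1::real))"
proof (rule UB_I[where M="(norm v + \<bar>l0\<bar> * 2)^2"])
  fix \<eta> :: real and q :: "real \<times> (real^2)" assume "q \<in> {a..b} \<times> sq2 1"
  then have "norm (snd q) \<le> 2" using sq2_norm by auto
  then have "norm (v - l0 *\<^sub>R snd q) \<le> norm v + \<bar>l0\<bar> * 2"
    using norm_triangle_ineq4[of v "l0 *\<^sub>R snd q"] by (simp add: mult_left_mono order_trans)
  then have "(norm (v - l0 *\<^sub>R snd q))^2 \<le> (norm v + \<bar>l0\<bar> * 2)^2" by (intro power_mono) auto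
  then show "\<bar>(norm (v - l0 *\<^sub>R snd q))^2\<bar> \<le> (norm v + \<bar>l0\<bar> * 2)^2" by simp
qed

end


lemma UO_phase1:
  fixes a b c cs l0 zpar ypar :: real and zp yp :: "real^2"
  assumes ab: "0 \<le> a" "a \<le> b" and c: "c > 0" and cs: "cs > 0" and zpar: "zpar > 0" and ypar: "ypar > 0"
  shows "UO (\<lambda>\<eta> q. thJ c cs l0 zp zpar yp ypar \<eta> q - thL1 c cs l0 zp zpar yp ypar \<eta> q) ({a..b} \<times> sq2 1)"
proof -
  define S :: "(real \<times> (real^2)) set" where "S = {a..b} \<times> sq2 1"
  have k: "c/cs*ypar > 0" using c cs ypar by simp
  have Wc: "UB (\<lambda>\<eta> q. fst q / c) S" unfolding S_def by (rule UB_w[OF ab])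
  have Wcs: "UB (\<lambda>\<eta> q. fst q / cs) S" unfolding S_def by (rule UB_w[OF ab])
  have t1: "UO (\<lambda>\<eta> q. (fst q/c)/\<eta>*(sqrt(zpar^2 + \<eta>*(norm(zp - l0 *\<^sub>R snd q))^2) - zpar - \<eta>*(norm(zp - l0 *\<^sub>R snd q))^2/(2*zpar))) S"
    by (rule UO_sqrt_rem[OF zpar Wc]) (auto simp: S_def intro: UB_A[OF ab])
  have t2: "UO (\<lambda>\<eta> q. (fst q/cs)/\<eta>*(sqrt(ypar^2 + \<eta>*(norm(yp - l0 *\<^sub>R snd q))^2) - ypar - \<eta>*(norm(yp - l0 *\<^sub>R snd q))^2/(2*ypar))) S"
    by (rule UO_sqrt_rem[OF ypar Wcs]) (auto simp: S_def intro: UB_A[OF ab])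
  have t3: "UO (\<lambda>\<eta> q. (fst q/c)/\<eta>*(sqrt(zpar^2 + \<eta>*(norm zp)^2) - zpar - \<eta>*(norm zp)^2/(2*zpar))) S"
    by (rule UO_sqrt_rem[OF zpar Wc]) (auto intro: UB_const)
  have t4: "UO (\<lambda>\<eta> q. (fst q/c)/\<eta>*(sqrt((c/cs*ypar)^2 + \<eta>*((c/cs)^4*(norm yp)^2)) - c/cs*ypar - \<eta>*((c/cs)^4*(norm yp)^2)/(2*(c/cs*ypar)))) S"
    by (rule UO_sqrt_rem[OF k Wc]) (auto intro: UB_const)
  have B5: "UB (\<lambda>\<eta> q. fst q*l0*(snd q \<bullet> zp)/c - fst q*l0^2*(norm (snd q))^2/(2*c)) S"
    unfolding S_def by (intro UB_add UB_diff UB_mult UB_minus UB_div_const UB_fst[OF ab] UB_uv[OF ab] UB_U2[OF ab] UB_const)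
  have t5: "UO (\<lambda>\<eta> q. (fst q*l0*(snd q \<bullet> zp)/c - fst q*l0^2*(norm (snd q))^2/(2*c))*(1/sqrt(zpar^2 + \<eta>*(norm zp)^2) - 1/zpar)) S"
    by (rule UO_mult_UB[OF B5]) (rule UO_inv_sqrt[OF zpar UB_const], simp)
  have B6: "UB (\<lambda>\<eta> q. -(fst q/(2*c))*((c/cs)^4-(c/cs)^2)*(norm yp)^2 - (fst q*l0/c)*(c/cs)^2*(snd q \<bullet> yp) + fst q*l0^2*(c/cs)^2*(norm (snd q))^2/(2*c)) S"
    unfolding S_def by (intro UB_add UB_diff UB_mult UB_minus UB_div_const UB_fst[OF ab] UB_uv[OF ab] UB_U2[OF ab] UB_const)
  have t6: "UO (\<lambda>\<eta> q. (-(fst q/(2*c))*((c/cs)^4-(c/cs)^2)*(norm yp)^2 - (fst q*l0/c)*(c/cs)^2*(snd q \<bullet> yp) + fst q*l0^2*(c/cs)^2*(norm (snd q))^2/(2*c))*(1/sqrt((c/cs*ypar)^2 + \<eta>*((c/cs)^4*(norm yp)^2)) - 1/(c/cs*ypar))) S"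
    by (rule UO_mult_UB[OF B6]) (rule UO_inv_sqrt[OF k UB_const], simp)
  have all: "UO (\<lambda>\<eta> q. (fst q/c)/\<eta>*(sqrt(zpar^2 + \<eta>*(norm(zp - l0 *\<^sub>R snd q))^2) - zpar - \<eta>*(norm(zp - l0 *\<^sub>R snd q))^2/(2*zpar))
      - (fst q/cs)/\<eta>*(sqrt(ypar^2 + \<eta>*(norm(yp - l0 *\<^sub>R snd q))^2) - ypar - \<eta>*(norm(yp - l0 *\<^sub>R snd q))^2/(2*ypar))
      - (fst q/c)/\<eta>*(sqrt(zpar^2 + \<eta>*(norm zp)^2) - zpar - \<eta>*(norm zp)^2/(2*zpar))
      + (fst q/c)/\<eta>*(sqrt((c/cs*ypar)^2 + \<eta>*((c/cs)^4*(norm yp)^2)) - c/cs*ypar - \<eta>*((c/cs)^4*(norm yp)^2)/(2*(c/cs*ypar)))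
      + (fst q*l0*(snd q \<bullet> zp)/c - fst q*l0^2*(norm (snd q))^2/(2*c))*(1/sqrt(zpar^2 + \<eta>*(norm zp)^2) - 1/zpar)
      + (-(fst q/(2*c))*((c/cs)^4-(c/cs)^2)*(norm yp)^2 - (fst q*l0/c)*(c/cs)^2*(snd q \<bullet> yp) + fst q*l0^2*(c/cs)^2*(norm (snd q))^2/(2*c))*(1/sqrt((c/cs*ypar)^2 + \<eta>*((c/cs)^4*(norm yp)^2)) - 1/(c/cs*ypar))) S"
    by (intro UO_add UO_diff t1 t2 t3 t4 t5 t6)
  show ?thesis unfolding S_def[symmetric]
  proof (rule UO_cong[OF all])
    fix \<eta> :: real and q :: "real \<times> (real^2)" assume h: "0 < \<eta>" "\<eta> \<le> 1" "q \<in> S"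
    have p1: "sqrt (zpar^2 + \<eta>*(norm zp)^2) \<noteq> 0" using zpar h by (intro order.strict_implies_not_eq[symmetric] real_sqrt_gt_zero add_pos_nonneg) auto
    have p2: "sqrt ((c/cs*ypar)^2 + \<eta>*((c/cs)^4*(norm yp)^2)) \<noteq> 0" using k h by (intro order.strict_implies_not_eq[symmetric] real_sqrt_gt_zero add_pos_nonneg) auto
    show "(fst q/c)/\<eta>*(sqrt(zpar^2 + \<eta>*(norm(zp - l0 *\<^sub>R snd q))^2) - zpar - \<eta>*(norm(zp - l0 *\<^sub>R snd q))^2/(2*zpar))
      - (fst q/cs)/\<eta>*(sqrt(ypar^2 + \<eta>*(norm(yp - l0 *\<^sub>R snd q))^2) - ypar - \<eta>*(norm(yp - l0 *\<^sub>R snd q))^2/(2*ypar))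
      - (fst q/c)/\<eta>*(sqrt(zpar^2 + \<eta>*(norm zp)^2) - zpar - \<eta>*(norm zp)^2/(2*zpar))
      + (fst q/c)/\<eta>*(sqrt((c/cs*ypar)^2 + \<eta>*((c/cs)^4*(norm yp)^2)) - c/cs*ypar - \<eta>*((c/cs)^4*(norm yp)^2)/(2*(c/cs*ypar)))
      + (fst q*l0*(snd q \<bullet> zp)/c - fst q*l0^2*(norm (snd q))^2/(2*c))*(1/sqrt(zpar^2 + \<eta>*(norm zp)^2) - 1/zpar)
      + (-(fst q/(2*c))*((c/cs)^4-(c/cs)^2)*(norm yp)^2 - (fst q*l0/c)*(c/cs)^2*(snd q \<bullet> yp) + fst q*l0^2*(c/cs)^2*(norm (snd q))^2/(2*c))*(1/sqrt((c/cs*ypar)^2 + \<eta>*((c/cs)^4*(norm yp)^2)) - 1/(c/cs*ypar))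
      = thJ c cs l0 zp zpar yp ypar \<eta> q - thL1 c cs l0 zp zpar yp ypar \<eta> q"
      unfolding thJ_def thL1_def Let_def dZ_def nrm_def nS_def
      by (rule th_identity1[symmetric]) (use h c cs zpar ypar p1 p2 in \<open>auto simp: norm_diff_sq\<close>)
  qed
qed


lemma UO_phase2:
  fixes a b c cs l0 zpar ypar :: real and zp yp :: "real^2"
  assumes ab: "0 \<le> a" "a \<le> b" and c: "c > 0" and cs: "cs > 0" and zpar: "zpar > 0" and ypar: "ypar > 0"
  shows "UO (\<lambda>\<eta> q. thJ c cs l0 zp zpar yp ypar \<eta> q - thL2 c cs l0 zp zpar yp ypar \<eta> q) ({a..b} \<times> sq2 1)"
proof -
  define S :: "(real \<times> (real^2)) set" where "S = {a..b} \<times> sq2 1"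
  have k: "c/cs*ypar > 0" using c cs ypar by simp
  have Wc: "UB (\<lambda>\<eta> q. fst q / c) S" unfolding S_def by (rule UB_w[OF ab])
  have Wcs: "UB (\<lambda>\<eta> q. fst q / cs) S" unfolding S_def by (rule UB_w[OF ab])
  have t1: "UO (\<lambda>\<eta> q. (fst q/c)/\<eta>*(sqrt(zpar^2 + \<eta>*(norm(zp - l0 *\<^sub>R snd q))^2) - zpar - \<eta>*(norm(zp - l0 *\<^sub>R snd q))^2/(2*zpar))) S"
    by (rule UO_sqrt_rem[OF zpar Wc]) (auto simp: S_def intro: UB_A[OF ab])
  have t2: "UO (\<lambda>\<eta> q. (fst q/cs)/\<eta>*(sqrt(ypar^2 + \<eta>*(norm(yp - l0 *\<^sub>R snd q))^2) - ypar - \<eta>*(norm(yp - l0 *\<^sub>R snd q))^2/(2*ypar))) S"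
    by (rule UO_sqrt_rem[OF ypar Wcs]) (auto simp: S_def intro: UB_A[OF ab])
  have k2: "cs/c*zpar > 0" using c cs zpar by simp
  have t3: "UO (\<lambda>\<eta> q. (fst q/cs)/\<eta>*(sqrt((cs/c*zpar)^2 + \<eta>*((cs/c)^4*(norm zp)^2)) - cs/c*zpar - \<eta>*((cs/c)^4*(norm zp)^2)/(2*(cs/c*zpar)))) S"
    by (rule UO_sqrt_rem[OF k2 Wcs]) (auto intro: UB_const)
  have t4: "UO (\<lambda>\<eta> q. (fst q/cs)/\<eta>*(sqrt(ypar^2 + \<eta>*(norm yp)^2) - ypar - \<eta>*(norm yp)^2/(2*ypar))) S"
    by (rule UO_sqrt_rem[OF ypar Wcs]) (auto intro: UB_const)
  have B5: "UB (\<lambda>\<eta> q. -(fst q/(2*cs))*((cs/c)^2-(cs/c)^4)*(norm zp)^2 + (fst q*l0/cs)*(cs/c)^2*(snd q \<bullet> zp) - fst q*l0^2*(cs/c)^2*(norm (snd q))^2/(2*cs)) S"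
    unfolding S_def by (intro UB_add UB_diff UB_mult UB_minus UB_div_const UB_fst[OF ab] UB_uv[OF ab] UB_U2[OF ab] UB_const)
  have t5: "UO (\<lambda>\<eta> q. (-(fst q/(2*cs))*((cs/c)^2-(cs/c)^4)*(norm zp)^2 + (fst q*l0/cs)*(cs/c)^2*(snd q \<bullet> zp) - fst q*l0^2*(cs/c)^2*(norm (snd q))^2/(2*cs))*(1/sqrt((cs/c*zpar)^2 + \<eta>*((cs/c)^4*(norm zp)^2)) - 1/(cs/c*zpar))) S"
    by (rule UO_mult_UB[OF B5]) (rule UO_inv_sqrt[OF k2 UB_const], simp)
  have B6: "UB (\<lambda>\<eta> q. -(fst q*l0/cs)*(snd q \<bullet> yp) + (norm (snd q))^2*fst q*l0^2/(2*cs)) S"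
    unfolding S_def by (intro UB_add UB_diff UB_mult UB_minus UB_div_const UB_fst[OF ab] UB_uv[OF ab] UB_U2[OF ab] UB_const)
  have t6: "UO (\<lambda>\<eta> q. (-(fst q*l0/cs)*(snd q \<bullet> yp) + (norm (snd q))^2*fst q*l0^2/(2*cs))*(1/sqrt(ypar^2 + \<eta>*(norm yp)^2) - 1/ypar)) S"
    by (rule UO_mult_UB[OF B6]) (rule UO_inv_sqrt[OF ypar UB_const], simp)
  have all: "UO (\<lambda>\<eta> q. (fst q/c)/\<eta>*(sqrt(zpar^2 + \<eta>*(norm(zp - l0 *\<^sub>R snd q))^2) - zpar - \<eta>*(norm(zp - l0 *\<^sub>R snd q))^2/(2*zpar))
      - (fst q/cs)/\<eta>*(sqrt(ypar^2 + \<eta>*(norm(yp - l0 *\<^sub>R snd q))^2) - ypar - \<eta>*(norm(yp - l0 *\<^sub>R snd q))^2/(2*ypar))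
      - (fst q/cs)/\<eta>*(sqrt((cs/c*zpar)^2 + \<eta>*((cs/c)^4*(norm zp)^2)) - cs/c*zpar - \<eta>*((cs/c)^4*(norm zp)^2)/(2*(cs/c*zpar)))
      + (fst q/cs)/\<eta>*(sqrt(ypar^2 + \<eta>*(norm yp)^2) - ypar - \<eta>*(norm yp)^2/(2*ypar))
      + (-(fst q/(2*cs))*((cs/c)^2-(cs/c)^4)*(norm zp)^2 + (fst q*l0/cs)*(cs/c)^2*(snd q \<bullet> zp) - fst q*l0^2*(cs/c)^2*(norm (snd q))^2/(2*cs))*(1/sqrt((cs/c*zpar)^2 + \<eta>*((cs/c)^4*(norm zp)^2)) - 1/(cs/c*zpar))
      + (-(fst q*l0/cs)*(snd q \<bullet> yp) + (norm (snd q))^2*fst q*l0^2/(2*cs))*(1/sqrt(ypar^2 + \<eta>*(norm yp)^2) - 1/ypar)) S"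
    by (intro UO_add UO_diff t1 t2 t3 t4 t5 t6)
  show ?thesis unfolding S_def[symmetric]
  proof (rule UO_cong[OF all])
    fix \<eta> :: real and q :: "real \<times> (real^2)" assume h: "0 < \<eta>" "\<eta> \<le> 1" "q \<in> S"
    have p1: "sqrt ((cs/c*zpar)^2 + \<eta>*((cs/c)^4*(norm zp)^2)) \<noteq> 0" using k2 h by (intro order.strict_implies_not_eq[symmetric] real_sqrt_gt_zero add_pos_nonneg) auto
    have p2: "sqrt (ypar^2 + \<eta>*(norm yp)^2) \<noteq> 0" using ypar h by (intro order.strict_implies_not_eq[symmetric] real_sqrt_gt_zero add_pos_nonneg) auto
    show "(fst q/c)/\<eta>*(sqrt(zpar^2 + \<eta>*(norm(zp - l0 *\<^sub>R snd q))^2) - zpar - \<eta>*(norm(zp - l0 *\<^sub>R snd q))^2/(2*zpar))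
      - (fst q/cs)/\<eta>*(sqrt(ypar^2 + \<eta>*(norm(yp - l0 *\<^sub>R snd q))^2) - ypar - \<eta>*(norm(yp - l0 *\<^sub>R snd q))^2/(2*ypar))
      - (fst q/cs)/\<eta>*(sqrt((cs/c*zpar)^2 + \<eta>*((cs/c)^4*(norm zp)^2)) - cs/c*zpar - \<eta>*((cs/c)^4*(norm zp)^2)/(2*(cs/c*zpar)))
      + (fst q/cs)/\<eta>*(sqrt(ypar^2 + \<eta>*(norm yp)^2) - ypar - \<eta>*(norm yp)^2/(2*ypar))
      + (-(fst q/(2*cs))*((cs/c)^2-(cs/c)^4)*(norm zp)^2 + (fst q*l0/cs)*(cs/c)^2*(snd q \<bullet> zp) - fst q*l0^2*(cs/c)^2*(norm (snd q))^2/(2*cs))*(1/sqrt((cs/c*zpar)^2 + \<eta>*((cs/c)^4*(norm zp)^2)) - 1/(cs/c*zpar))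
      + (-(fst q*l0/cs)*(snd q \<bullet> yp) + (norm (snd q))^2*fst q*l0^2/(2*cs))*(1/sqrt(ypar^2 + \<eta>*(norm yp)^2) - 1/ypar)
      = thJ c cs l0 zp zpar yp ypar \<eta> q - thL2 c cs l0 zp zpar yp ypar \<eta> q"
      unfolding thJ_def thL2_def Let_def dZ_def nrm_def nS_def
      by (rule th_identity2[symmetric]) (use h c cs zpar ypar p1 p2 in \<open>auto simp: norm_diff_sq\<close>)
  qed
qed


lemma amp_identity1:
  fixes K dz dy nz np zpar ypar k :: real
  assumes "zpar \<noteq> 0" "ypar \<noteq> 0" "k \<noteq> 0" "dz \<noteq> 0" "dy \<noteq> 0" "nz \<noteq> 0" "np \<noteq> 0"
  shows "K*(1/dz*(1/dy)) - K*(1/nz*(k*(1/np))) = K*((1/dz - 1/zpar)*(1/dy) + (1/zpar)*(1/dy - 1/ypar) - (1/nz - 1/zpar)*(k*(1/np)) - ((1/zpar)*k)*(1/np - 1/(k*ypar)))"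
  using assms by (simp add: field_simps)

lemma amp_identity2:
  fixes K dz dy ny nq zpar ypar k :: real
  assumes "zpar \<noteq> 0" "ypar \<noteq> 0" "k \<noteq> 0" "dz \<noteq> 0" "dy \<noteq> 0" "ny \<noteq> 0" "nq \<noteq> 0"
  shows "K*(1/dz*(1/dy)) - K*(1/ny*(k*(1/nq))) = K*((1/dz - 1/zpar)*(1/dy) + (1/zpar)*(1/dy - 1/ypar) - (1/ny - 1/ypar)*(k*(1/nq)) - ((1/ypar)*k)*(1/nq - 1/(k*zpar)))"
  using assms by (simp add: field_simps)

context
  fixes a b c cs l0 zpar ypar :: real and zp yp :: "real^2"
  assumes ab: "0 \<le> a" "a \<le> b" and c: "c > 0" and cs: "cs > 0" and zpar: "zpar > 0" and ypar: "ypar > 0"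
begin

lemma sqrt_pos_ne: "p > 0 \<Longrightarrow> \<eta> > 0 \<Longrightarrow> t \<ge> 0 \<Longrightarrow> sqrt (p^2 + \<eta> * t) \<noteq> 0"
  by (metis add_pos_nonneg mult_nonneg_nonneg order_less_irrefl real_sqrt_eq_zero_cancel_iff zero_less_power less_imp_le)

lemma T0A: "0 \<le> (norm (v - l0 *\<^sub>R snd q))^2" by simp

lemma UB_aJ: "UB (aJ l0 zp zpar yp ypar) ({a..b} \<times> sq2 1)"
proof -
  have "UB (\<lambda>\<eta> q. 1 / (16 * pi^2) * (1 / sqrt (zpar^2 + \<eta> * (norm (zp - l0 *\<^sub>R snd q))^2) * (1 / sqrt (ypar^2 + \<eta> * (norm (yp - l0 *\<^sub>R snd q))^2)))) ({a..b} \<times> sq2 1)"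
    by (intro UB_mult UB_const UB_inv_sqrt zpar ypar T0A)
  then show ?thesis unfolding aJ_def dZ_def by simp
qed

lemma UB_aL1: "UB (aL1 c cs zp zpar yp ypar) ({a..b} \<times> sq2 1)"
proof -
  have k: "c/cs*ypar > 0" using c cs ypar by simp
  have "UB (\<lambda>\<eta> q. 1 / (16 * pi^2) * (1 / sqrt (zpar^2 + \<eta> * (norm zp)^2) * (c/cs * (1 / sqrt ((c/cs*ypar)^2 + \<eta> * ((c/cs)^4 * (norm yp)^2)))))) ({a..b} \<times> sq2 1)"
    by (intro UB_mult UB_const UB_inv_sqrt zpar k) auto
  then show ?thesis unfolding aL1_def nrm_def nS_def by simp
qed

lemma UB_aL2: "UB (aL2 c cs zp zpar yp ypar) ({a..b} \<times> sq2 1)"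
proof -
  have k: "cs/c*zpar > 0" using c cs zpar by simp
  have "UB (\<lambda>\<eta> q. 1 / (16 * pi^2) * (1 / sqrt (ypar^2 + \<eta> * (norm yp)^2) * (cs/c * (1 / sqrt ((cs/c*zpar)^2 + \<eta> * ((cs/c)^4 * (norm zp)^2)))))) ({a..b} \<times> sq2 1)"
    by (intro UB_mult UB_const UB_inv_sqrt ypar k) auto
  then show ?thesis unfolding aL2_def nrm_def nS_def by simp
qed

lemma UO_amp1: "UO (\<lambda>\<eta> q. aJ l0 zp zpar yp ypar \<eta> q - aL1 c cs zp zpar yp ypar \<eta> q) ({a..b} \<times> sq2 1)"
proof -
  have k: "c/cs*ypar > 0" using c cs ypar by simp
  have kk: "c/cs \<noteq> 0" using c cs by simp
  let ?dz = "\<lambda>\<eta> q. sqrt (zpar^2 + \<eta> * (norm (zp - l0 *\<^sub>R snd q))^2)"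
  let ?dy = "\<lambda>\<eta> q. sqrt (ypar^2 + \<eta> * (norm (yp - l0 *\<^sub>R snd q))^2)"
  let ?nz = "\<lambda>\<eta>. sqrt (zpar^2 + \<eta> * (norm zp)^2)"
  let ?np = "\<lambda>\<eta>. sqrt ((c/cs*ypar)^2 + \<eta> * ((c/cs)^4 * (norm yp)^2))"
  have u1: "UO (\<lambda>\<eta> q. 1 / ?dz \<eta> q - 1/zpar) ({a..b} \<times> sq2 1)"
    by (rule UO_inv_sqrt[OF zpar UB_A[OF ab]]) simp
  have u2: "UO (\<lambda>\<eta> q. 1 / ?dy \<eta> q - 1/ypar) ({a..b} \<times> sq2 1)"
    by (rule UO_inv_sqrt[OF ypar UB_A[OF ab]]) simp
  have u3: "UO (\<lambda>\<eta> q. 1 / ?nz \<eta> - 1/zpar) ({a..b} \<times> sq2 1)"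
    by (rule UO_inv_sqrt[OF zpar UB_const]) simp
  have u4: "UO (\<lambda>\<eta> q. 1 / ?np \<eta> - 1/(c/cs*ypar)) ({a..b} \<times> sq2 1)"
    by (rule UO_inv_sqrt[OF k UB_const]) simp
  have b2: "UB (\<lambda>\<eta> q. 1 / ?dy \<eta> q) ({a..b} \<times> sq2 1)" by (rule UB_inv_sqrt[OF ypar]) simp
  have b4: "UB (\<lambda>\<eta> q. c/cs * (1 / ?np \<eta>)) ({a..b} \<times> sq2 1)" by (intro UB_mult UB_const UB_inv_sqrt[OF k]) simp
  have all: "UO (\<lambda>\<eta> q. 1 / (16 * pi^2) * ((1/?dz \<eta> q - 1/zpar)*(1/?dy \<eta> q) + (1/zpar)*(1/?dy \<eta> q - 1/ypar)
      - (1/?nz \<eta> - 1/zpar)*(c/cs*(1/?np \<eta>)) - ((1/zpar)*(c/cs))*(1/?np \<eta> - 1/(c/cs*ypar)))) ({a..b} \<times> sq2 1)"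
    by (intro UO_mult_UB[OF UB_const] UO_add UO_diff UO_mult_UB'[OF u1 b2] UO_mult_UB[OF UB_const u2]
        UO_mult_UB'[OF u3 b4] UO_mult_UB[OF UB_const u4])
  show ?thesis
  proof (rule UO_cong[OF all])
    fix \<eta> :: real and q :: "real \<times> (real^2)" assume h: "0 < \<eta>" "\<eta> \<le> 1" "q \<in> {a..b} \<times> sq2 1"
    show "1 / (16 * pi^2) * ((1/?dz \<eta> q - 1/zpar)*(1/?dy \<eta> q) + (1/zpar)*(1/?dy \<eta> q - 1/ypar)
      - (1/?nz \<eta> - 1/zpar)*(c/cs*(1/?np \<eta>)) - ((1/zpar)*(c/cs))*(1/?np \<eta> - 1/(c/cs*ypar)))
      = aJ l0 zp zpar yp ypar \<eta> q - aL1 c cs zp zpar yp ypar \<eta> q"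
      unfolding aJ_def aL1_def dZ_def nrm_def nS_def
    proof (rule amp_identity1[symmetric])
      show "zpar \<noteq> 0" "ypar \<noteq> 0" "c/cs \<noteq> 0" using zpar ypar kk by auto
      show "?dz \<eta> q \<noteq> 0" by (rule sqrt_pos_ne) (use h zpar in auto)
      show "?dy \<eta> q \<noteq> 0" by (rule sqrt_pos_ne) (use h ypar in auto)
      show "?nz \<eta> \<noteq> 0" by (rule sqrt_pos_ne) (use h zpar in auto)
      show "?np \<eta> \<noteq> 0" by (rule sqrt_pos_ne) (use h k in auto)
    qed
  qed
qed

lemma UO_amp2: "UO (\<lambda>\<eta> q. aJ l0 zp zpar yp ypar \<eta> q - aL2 c cs zp zpar yp ypar \<eta> q) ({a..b} \<times> sq2 1)"
proof -
  have k: "cs/c*zpar > 0" using c cs zpar by simp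
  have kk: "cs/c \<noteq> 0" using c cs by simp
  let ?dz = "\<lambda>\<eta> q. sqrt (zpar^2 + \<eta> * (norm (zp - l0 *\<^sub>R snd q))^2)"
  let ?dy = "\<lambda>\<eta> q. sqrt (ypar^2 + \<eta> * (norm (yp - l0 *\<^sub>R snd q))^2)"
  let ?ny = "\<lambda>\<eta>. sqrt (ypar^2 + \<eta> * (norm yp)^2)"
  let ?nq = "\<lambda>\<eta>. sqrt ((cs/c*zpar)^2 + \<eta> * ((cs/c)^4 * (norm zp)^2))"
  have u1: "UO (\<lambda>\<eta> q. 1 / ?dz \<eta> q - 1/zpar) ({a..b} \<times> sq2 1)"
    by (rule UO_inv_sqrt[OF zpar UB_A[OF ab]]) simp
  have u2: "UO (\<lambda>\<eta> q. 1 / ?dy \<eta> q - 1/ypar) ({a..b} \<times> sq2 1)"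
    by (rule UO_inv_sqrt[OF ypar UB_A[OF ab]]) simp
  have u3: "UO (\<lambda>\<eta> q. 1 / ?ny \<eta> - 1/ypar) ({a..b} \<times> sq2 1)"
    by (rule UO_inv_sqrt[OF ypar UB_const]) simp
  have u4: "UO (\<lambda>\<eta> q. 1 / ?nq \<eta> - 1/(cs/c*zpar)) ({a..b} \<times> sq2 1)"
    by (rule UO_inv_sqrt[OF k UB_const]) simp
  have b2: "UB (\<lambda>\<eta> q. 1 / ?dy \<eta> q) ({a..b} \<times> sq2 1)" by (rule UB_inv_sqrt[OF ypar]) simp
  have b4: "UB (\<lambda>\<eta> q. cs/c * (1 / ?nq \<eta>)) ({a..b} \<times> sq2 1)" by (intro UB_mult UB_const UB_inv_sqrt[OF k]) simp
  have all: "UO (\<lambda>\<eta> q. 1 / (16 * pi^2) * ((1/?dz \<eta> q - 1/zpar)*(1/?dy \<eta> q) + (1/zpar)*(1/?dy \<eta> q - 1/ypar)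
      - (1/?ny \<eta> - 1/ypar)*(cs/c*(1/?nq \<eta>)) - ((1/ypar)*(cs/c))*(1/?nq \<eta> - 1/(cs/c*zpar)))) ({a..b} \<times> sq2 1)"
    by (intro UO_mult_UB[OF UB_const] UO_add UO_diff UO_mult_UB'[OF u1 b2] UO_mult_UB[OF UB_const u2]
        UO_mult_UB'[OF u3 b4] UO_mult_UB[OF UB_const u4])
  show ?thesis
  proof (rule UO_cong[OF all])
    fix \<eta> :: real and q :: "real \<times> (real^2)" assume h: "0 < \<eta>" "\<eta> \<le> 1" "q \<in> {a..b} \<times> sq2 1"
    show "1 / (16 * pi^2) * ((1/?dz \<eta> q - 1/zpar)*(1/?dy \<eta> q) + (1/zpar)*(1/?dy \<eta> q - 1/ypar)
      - (1/?ny \<eta> - 1/ypar)*(cs/c*(1/?nq \<eta>)) - ((1/ypar)*(cs/c))*(1/?nq \<eta> - 1/(cs/c*zpar)))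
      = aJ l0 zp zpar yp ypar \<eta> q - aL2 c cs zp zpar yp ypar \<eta> q"
      unfolding aJ_def aL2_def dZ_def nrm_def nS_def
    proof (rule amp_identity2[symmetric])
      show "zpar \<noteq> 0" "ypar \<noteq> 0" "cs/c \<noteq> 0" using zpar ypar kk by auto
      show "?dz \<eta> q \<noteq> 0" by (rule sqrt_pos_ne) (use h zpar in auto)
      show "?dy \<eta> q \<noteq> 0" by (rule sqrt_pos_ne) (use h ypar in auto)
      show "?ny \<eta> \<noteq> 0" by (rule sqrt_pos_ne) (use h ypar in auto)
      show "?nq \<eta> \<noteq> 0" by (rule sqrt_pos_ne) (use h k in auto)
    qed
  qed
qed

end


lemma sqrt_pos_ne': "p > 0 \<Longrightarrow> \<eta> > 0 \<Longrightarrow> sqrt (p^2 + \<eta> * (norm (v::real^2))^2) \<noteq> 0"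
  by (rule sqrt_pos_ne) auto

lemma sqrt_pos_ne'': "p > 0 \<Longrightarrow> \<eta> > 0 \<Longrightarrow> sqrt (p^2 + \<eta> * (r^4 * (norm (v::real^2))^2)) \<noteq> 0"
  by (rule sqrt_pos_ne) auto

lemma sqrt_zero_False: "sqrt (p^2 + \<eta> * (norm (v::real^2))^2) = 0 \<Longrightarrow> p > 0 \<Longrightarrow> \<eta> > 0 \<Longrightarrow> False"
  using sqrt_pos_ne' by blast

context
  fixes c cs l0 zpar ypar \<eta> :: real and zp yp :: "real^2" and A :: "(real \<times> (real^2)) set"
  assumes c: "c > 0" and cs: "cs > 0" and zpar: "zpar > 0" and ypar: "ypar > 0" and e: "\<eta> > 0"
begin

lemma cont_aJ: "continuous_on A (aJ l0 zp zpar yp ypar \<eta>)"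
  unfolding aJ_def dZ_def
  by (intro continuous_intros) (use zpar ypar e in \<open>auto simp del: real_sqrt_eq_zero_cancel_iff dest: sqrt_zero_False\<close>)

lemma cont_thJ: "continuous_on A (thJ c cs l0 zp zpar yp ypar \<eta>)"
  unfolding thJ_def dZ_def
  by (intro continuous_intros) (use c cs e in simp_all)

lemma cont_aL1: "continuous_on A (aL1 c cs zp zpar yp ypar \<eta>)"
  unfolding aL1_def by (rule continuous_on_const)

lemma cont_aL2: "continuous_on A (aL2 c cs zp zpar yp ypar \<eta>)"
  unfolding aL2_def by (rule continuous_on_const)

lemma cont_thL1: "continuous_on A (thL1 c cs l0 zp zpar yp ypar \<eta>)"
proof -
  have p: "nS (c/cs) yp ypar \<eta> > 0" "nrm zp zpar \<eta> > 0"
    using nS_pos[OF ypar _ e, of "c/cs" yp] nrm_pos[OF zpar e, of zp] c cs by auto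
  show ?thesis unfolding thL1_def Let_def
    by (intro continuous_intros) (use c cs e p in simp_all)
qed

lemma cont_thL2: "continuous_on A (thL2 c cs l0 zp zpar yp ypar \<eta>)"
proof -
  have p: "nS (cs/c) zp zpar \<eta> > 0" "nrm yp ypar \<eta> > 0"
    using nS_pos[OF zpar _ e, of "cs/c" zp] nrm_pos[OF ypar e, of yp] c cs by auto
  show ?thesis unfolding thL2_def Let_def
    by (intro continuous_intros) (use c cs e p in simp_all)
qed

end


theorem mainTheorem1:
  fixes c cs l0 wmin wmax zpar ypar :: real and zp yp :: "real^2"
  assumes "c > 0" and "cs > 0" and "l0 > 0"
    and "0 < wmin" and "wmin < wmax"
    and "ypar > 0" and "zpar > 0"
  shows "(\<lambda>\<eta>. psf c cs (sqrt \<eta> * l0) {wmin / \<eta> .. wmax / \<eta>} (parax \<eta> zp zpar) (parax \<eta> yp ypar)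
              - lead1 c cs l0 {wmin .. wmax} \<eta> (parax \<eta> zp zpar) (parax \<eta> yp ypar))
           \<in> O[at_right 0](\<lambda>_. 1)
    \<and> (\<lambda>\<eta>. psf c cs (sqrt \<eta> * l0) {wmin / \<eta> .. wmax / \<eta>} (parax \<eta> zp zpar) (parax \<eta> yp ypar)
              - lead2 c cs l0 {wmin .. wmax} \<eta> (parax \<eta> zp zpar) (parax \<eta> yp ypar))
           \<in> O[at_right 0](\<lambda>_. 1)"
proof -
  note c = \<open>c > 0\<close> and cs = \<open>cs > 0\<close> and l0 = \<open>l0 > 0\<close> and ypar = \<open>ypar > 0\<close> and zpar = \<open>zpar > 0\<close>
  have ab: "0 \<le> wmin" "wmin \<le> wmax" using assms by auto
  have L1: "(\<lambda>\<eta>. psf c cs (sqrt \<eta> * l0) {wmin / \<eta> .. wmax / \<eta>} (parax \<eta> zp zpar) (parax \<eta> yp ypar)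
              - lead1 c cs l0 {wmin .. wmax} \<eta> (parax \<eta> zp zpar) (parax \<eta> yp ypar))
           \<in> O[at_right 0](\<lambda>_. 1)"
  apply (rule assembly[where K = "l0^4" and aJ = "aJ l0 zp zpar yp ypar" and thJ = "thJ c cs l0 zp zpar yp ypar"
        and aL = "aL1 c cs zp zpar yp ypar" and thL = "thL1 c cs l0 zp zpar yp ypar"
        and P = "\<lambda>\<eta>. psf c cs (sqrt \<eta> * l0) {wmin / \<eta> .. wmax / \<eta>} (parax \<eta> zp zpar) (parax \<eta> yp ypar)"
        and Q = "\<lambda>\<eta>. lead1 c cs l0 {wmin .. wmax} \<eta> (parax \<eta> zp zpar) (parax \<eta> yp ypar)", OF ab])
    apply (erule psf_rep[OF _ zpar ypar l0])
    apply (erule lead1_rep[OF _ zpar ypar c cs])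
    by (use cont_aJ cont_thJ cont_aL1 cont_thL1 c cs zpar ypar
         UO_amp1[OF ab c cs zpar ypar] UO_phase1[OF ab c cs zpar ypar] UB_aJ[OF ab c cs zpar ypar] UB_aL1[OF ab c cs zpar ypar] in auto)
  have L2: "(\<lambda>\<eta>. psf c cs (sqrt \<eta> * l0) {wmin / \<eta> .. wmax / \<eta>} (parax \<eta> zp zpar) (parax \<eta> yp ypar)
              - lead2 c cs l0 {wmin .. wmax} \<eta> (parax \<eta> zp zpar) (parax \<eta> yp ypar))
           \<in> O[at_right 0](\<lambda>_. 1)"
  apply (rule assembly[where K = "l0^4" and aJ = "aJ l0 zp zpar yp ypar" and thJ = "thJ c cs l0 zp zpar yp ypar"
        and aL = "aL2 c cs zp zpar yp ypar" and thL = "thL2 c cs l0 zp zpar yp ypar"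
        and P = "\<lambda>\<eta>. psf c cs (sqrt \<eta> * l0) {wmin / \<eta> .. wmax / \<eta>} (parax \<eta> zp zpar) (parax \<eta> yp ypar)"
        and Q = "\<lambda>\<eta>. lead2 c cs l0 {wmin .. wmax} \<eta> (parax \<eta> zp zpar) (parax \<eta> yp ypar)", OF ab])
    apply (erule psf_rep[OF _ zpar ypar l0])
    apply (erule lead2_rep[OF _ zpar ypar c cs])
    by (use cont_aJ cont_thJ cont_aL2 cont_thL2 c cs zpar ypar
         UO_amp2[OF ab c cs zpar ypar] UO_phase2[OF ab c cs zpar ypar] UB_aJ[OF ab c cs zpar ypar] UB_aL2[OF ab c cs zpar ypar] in auto)
  show ?thesis using L1 L2 by blast
qed


end
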